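(* With the setting of the context, for any $0<z<\delta\le\delta_1$, $$q_N(z,\delta):=\pi^{N,\delta}\{B_M^c(Nc,Nz)\}\le2\,\hat\zeta_N\big(z(1-e^{-1/2})/(2c_1(M))\big),$$ where $B_M^c(Nc,Nz)$ is the complement of $B_M(Nc,Nz)$.
   Context: Setting: for each $N$, $X^N$ is a pure jump Markov process on $S_N\subseteq\mathbb Z^d$, $N^{-1}S_N\subseteq\hat S$ closed; Assumption 1: finite $\mathcal J\subset\mathbb Z^d$, continuously differentiable $r_J:\hat S\to[0,\infty)$, only transitions $X\to X+J$ at rate $Nr_J(N^{-1}X)$; Assumption 2: every vector of $\mathbb Z^d$ is a finite sum of elements of $\mathcal J$; $F(y)=\sum_JJr_J(y)$; Assumption 3: $c$ in the interior of $\hat S$, $F(c)=0$, $r_J(c)>0$ for all $J$, $\rho>0$ with all eigenvalues of $\sum_JJ\nabla r_J(c)$ of real part $<-\rho$. $|\cdot|$ Euclidean norm; $\|x\|_M=(x^TMx)^{1/2}$; $B_M(z,\epsilon)=\{x:\|x-z\|_M\le\epsilon\}$; $c_1(M)^2$ largest eigenvalue of $M$. $M$ (real symmetric positive definite) and $\delta_0>0$ are fixed with $B_M(c,\delta_0)\subseteq\hat S$ such that every solution $y$ of $dy/dt=F(y)$ with $\|y(0)-c\|_M\le\delta_0$ satisfies $\frac d{dt}\|y(t)-c\|_M\le-\rho\|y(t)-c\|_M$, and for any two such solutions $\frac d{dt}\|y-z\|_M\le-\rho\|y-z\|_M$. Fix $\delta_1\in(0,\delta_0]$ and $r_0>0$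 with $r_J>r_0$ on $B_M(c,\delta_1)$. $\mathcal X_N(\delta)=\{X\in S_N:\|X-Nc\|_M\le N\delta\}$; $X^{N,\delta}$ is the chain on $\mathcal X_N(\delta)$ with the rates of $X^N$ except that transitions out of $\mathcal X_N(\delta)$ have rate zero; $\pi^{N,\delta}$ is its stationary distribution. $J^*=\max_J|J|$, $R^*(\mathcal K)=\sup_{y\in\mathcal K}\sum_Jr_J(y)$, $L(\mathcal K)=\sup_{y\in\mathcal K}|DF(y)|$, $\zeta_{N,T,\mathcal K}(z)=2d\exp\{-\frac{Nz}{2dJ^*}\min(1,\frac z{deTR^*(\mathcal K)J^*})\}$, $\hat\zeta_N(z)=\zeta_{N,\rho^{-1},B_M(c,\delta_0)}(ze^{-\rho^{-1}L(B_M(c,\delta_0))})$. *)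

theory Defs
  imports "HOL-Analysis.Analysis"
begin

definition rvec :: "int^'d \<Rightarrow> real^'d" where
  "rvec x = (\<chi> i. real_of_int (x $ i))"

definition Mnorm :: "real^'d^'d \<Rightarrow> real^'d \<Rightarrow> real" where
  "Mnorm M x = sqrt (x \<bullet> (M *v x))"

definition MBall :: "real^'d^'d \<Rightarrow> real^'d \<Rightarrow> real \<Rightarrow> (real^'d) set" where
  "MBall M z e = {x. Mnorm M (x - z) \<le> e}"

definition sym_posdef :: "real^'d^'d \<Rightarrow> bool" where
  "sym_posdef M \<longleftrightarrow> transpose M = M \<and> (\<forall>x. x \<noteq> 0 \<longrightarrow> x \<bullet> (M *v x) > 0)"

definition max_eig :: "real^'d^'d \<Rightarrow> real" where
  "max_eig M = Max {l. \<exists>v. v \<noteq> 0 \<and> M *v v = l *s v}"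

definition c1 :: "real^'d^'d \<Rightarrow> real" where
  "c1 M = sqrt (max_eig M)"

definition is_eigenvalue :: "real^'d^'d \<Rightarrow> complex \<Rightarrow> bool" where
  "is_eigenvalue A lam \<longleftrightarrow>
     (\<exists>v::complex^'d. v \<noteq> 0 \<and> (\<chi> i k. complex_of_real (A $ i $ k)) *v v = lam *s v)"

text \<open>Drift F(y) = sum_J J r_J(y) and its Jacobian, given gradients Dr J y of r J.\<close>
definition drift :: "(int^'d) set \<Rightarrow> (int^'d \<Rightarrow> real^'d \<Rightarrow> real) \<Rightarrow> real^'d \<Rightarrow> real^'d" where
  "drift JJ r y = (\<Sum>J\<in>JJ. r J y *\<^sub>R rvec J)"

definition jac :: "(int^'d) set \<Rightarrow> (int^'d \<Rightarrow> real^'d \<Rightarrow> real^'d) \<Rightarrow> real^'d \<Rightarrow> real^'d^'d" where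
  "jac JJ Dr y = (\<chi> i k. \<Sum>J\<in>JJ. real_of_int (J $ i) * (Dr J y) $ k)"

definition ode_sol :: "(real^'d \<Rightarrow> real^'d) \<Rightarrow> (real^'d) set \<Rightarrow> real \<Rightarrow> (real \<Rightarrow> real^'d) \<Rightarrow> bool" where
  "ode_sol F Shat T y \<longleftrightarrow> 0 < T \<and>
     (\<forall>t\<in>{0..T}. y t \<in> Shat \<and> (y has_vector_derivative F (y t)) (at t within {0..T}))"

definition Jstar :: "(int^'d) set \<Rightarrow> real" where
  "Jstar JJ = Max ((\<lambda>J. norm (rvec J)) ` JJ)"

definition Rstar :: "(int^'d) set \<Rightarrow> (int^'d \<Rightarrow> real^'d \<Rightarrow> real) \<Rightarrow> (real^'d) set \<Rightarrow> real" where
  "Rstar JJ r K = (SUP y\<in>K. \<Sum>J\<in>JJ. r J y)"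

definition Lconst :: "(int^'d) set \<Rightarrow> (int^'d \<Rightarrow> real^'d \<Rightarrow> real^'d) \<Rightarrow> (real^'d) set \<Rightarrow> real" where
  "Lconst JJ Dr K = (SUP y\<in>K. onorm (\<lambda>h. jac JJ Dr y *v h))"

text \<open>zeta_{N,T,K}(z) with d = dim, Rs = R*(K), Js = J*.\<close>
definition zeta :: "nat \<Rightarrow> nat \<Rightarrow> real \<Rightarrow> real \<Rightarrow> real \<Rightarrow> real \<Rightarrow> real" where
  "zeta d N T Rs Js z =
     2 * real d * exp (- (real N * z / (2 * real d * Js)) * min 1 (z / (real d * exp 1 * T * Rs * Js)))"

definition trunc_rate :: "(int^'d) set \<Rightarrow> (int^'d \<Rightarrow> real^'d \<Rightarrow> real) \<Rightarrow> nat \<Rightarrow> (int^'d) set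
     \<Rightarrow> int^'d \<Rightarrow> int^'d \<Rightarrow> real" where
  "trunc_rate JJ r N XX x y =
     (if x \<in> XX \<and> y \<in> XX then (\<Sum>J\<in>{J\<in>JJ. x + J = y}. real N * r J ((1 / real N) *\<^sub>R rvec x)) else 0)"

definition stationary :: "'a set \<Rightarrow> ('a \<Rightarrow> 'a \<Rightarrow> real) \<Rightarrow> ('a \<Rightarrow> real) \<Rightarrow> bool" where
  "stationary XX q p \<longleftrightarrow>
     (\<forall>x. 0 \<le> p x) \<and> (\<forall>x. x \<notin> XX \<longrightarrow> p x = 0) \<and> sum p XX = 1 \<and>
     (\<forall>x\<in>XX. p x * (\<Sum>y\<in>XX - {x}. q x y) = (\<Sum>y\<in>XX - {x}. p y * q y x))"

end

theory Submission
  imports Defs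
begin

definition bf :: "real^'d^'d \<Rightarrow> real^'d \<Rightarrow> real^'d \<Rightarrow> real" where
  "bf M x y = x \<bullet> (M *v y)"

lemma bf_sym: assumes "transpose M = M" shows "bf M x y = bf M y x"
proof -
  have "x \<bullet> (M *v y) = (x v* M) \<bullet> y" by (simp add: dot_lmul_matrix)
  also have "x v* M = transpose M *v x" by (simp add: transpose_matrix_vector)
  finally show ?thesis using assms by (simp add: bf_def inner_commute)
qed

lemma bf_add_left: "bf M (x + y) z = bf M x z + bf M y z"
  by (simp add: bf_def inner_add_left)
lemma bf_add_right: "bf M z (x + y) = bf M z x + bf M z y"
  by (simp add: bf_def inner_add_right matrix_vector_right_distrib)
lemma bf_diff_left: "bf M (x - y) z = bf M x z - bf M y z"
  by (simp add: bf_def inner_diff_left)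
lemma bf_diff_right: "bf M z (x - y) = bf M z x - bf M z y"
  by (simp add: bf_def inner_diff_right matrix_vector_mult_diff_distrib)
lemma bf_scale_left: "bf M (a *\<^sub>R x) z = a * bf M x z"
  by (simp add: bf_def)
lemma bf_scale_right: "bf M z (a *\<^sub>R x) = a * bf M z x"
  by (simp add: bf_def matrix_vector_mult_scaleR)
lemma bf_zero[simp]: "bf M 0 z = 0" "bf M z 0 = 0"
  by (simp_all add: bf_def)

lemma bf_nonneg: assumes "sym_posdef M" shows "0 \<le> bf M x x"
proof (cases "x = 0")
  case False then show ?thesis using assms unfolding sym_posdef_def bf_def by (meson less_imp_le)
qed (simp add: bf_def)

lemma bf_pos: assumes "sym_posdef M" "x \<noteq> 0" shows "0 < bf M x x"
  using assms unfolding sym_posdef_def bf_def by auto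

lemma Mnorm_bf: "Mnorm M x = sqrt (bf M x x)"
  by (simp add: Mnorm_def bf_def)

lemma Mnorm_sq: assumes "sym_posdef M" shows "(Mnorm M x)\<^sup>2 = bf M x x"
  using bf_nonneg[OF assms] by (simp add: Mnorm_bf)

lemma Mnorm_nonneg: assumes "sym_posdef M" shows "0 \<le> Mnorm M x"
  using bf_nonneg[OF assms] by (simp add: Mnorm_bf)

lemma bf_CS: assumes M: "sym_posdef M" shows "bf M x y \<le> Mnorm M x * Mnorm M y"
proof (cases "y = 0")
  case True then show ?thesis by (simp add: Mnorm_def bf_def)
next
  case False
  have sym: "transpose M = M" using M by (simp add: sym_posdef_def)
  define qy where "qy = bf M y y"
  define b where "b = bf M x y"
  have qy: "qy > 0" using bf_pos[OF M False] by (simp add: qy_def)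
  define t where "t = b / qy"
  have "0 \<le> bf M (x - t *\<^sub>R y) (x - t *\<^sub>R y)" by (rule bf_nonneg[OF M])
  also have "\<dots> = bf M x x - 2 * t * b + t^2 * qy"
    using bf_sym[OF sym, of y x]
    by (simp add: bf_diff_left bf_diff_right bf_scale_left bf_scale_right b_def qy_def power2_eq_square algebra_simps)
  also have "\<dots> = bf M x x - b^2 / qy"
    using qy by (simp add: t_def power2_eq_square field_simps)
  finally have "b^2 \<le> bf M x x * qy" using qy by (simp add: field_simps)
  then have "sqrt (b^2) \<le> sqrt (bf M x x * qy)" by (rule real_sqrt_le_mono)
  then have "\<bar>b\<bar> \<le> sqrt (bf M x x) * sqrt qy" by (simp add: real_sqrt_mult)
  then show ?thesis by (simp add: Mnorm_bf b_def qy_def)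
qed

lemma Mnorm_sq_add: assumes M: "sym_posdef M"
  shows "(Mnorm M (x + y))\<^sup>2 = (Mnorm M x)\<^sup>2 + 2 * bf M x y + (Mnorm M y)\<^sup>2"
proof -
  have sym: "transpose M = M" using M by (simp add: sym_posdef_def)
  show ?thesis using bf_sym[OF sym, of y x]
    by (simp add: Mnorm_sq[OF M] bf_add_left bf_add_right)
qed

lemma Mnorm_triangle: assumes M: "sym_posdef M" shows "Mnorm M (x + y) \<le> Mnorm M x + Mnorm M y"
proof -
  have "(Mnorm M (x + y))\<^sup>2 \<le> (Mnorm M x + Mnorm M y)\<^sup>2"
    using Mnorm_sq_add[OF M, of x y] bf_CS[OF M, of x y] by (simp add: power2_eq_square algebra_simps)
  then show ?thesis using Mnorm_nonneg[OF M] by (meson add_nonneg_nonneg power2_le_imp_le)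
qed

lemma Mnorm_zero[simp]: "Mnorm M 0 = 0" by (simp add: Mnorm_def)

lemma continuous_on_bf: "continuous_on S (\<lambda>x. bf M x x)"
  unfolding bf_def by (intro continuous_intros linear_continuous_on bounded_linear_intros) 


lemma rayleigh_max:
  fixes M :: "real^'d^'d"
  assumes M: "sym_posdef M"
  shows "\<exists>lam v. v \<noteq> 0 \<and> M *v v = lam *s v \<and> lam > 0 \<and> (\<forall>x. bf M x x \<le> lam * (norm x)\<^sup>2)"
proof -
  have sym: "transpose M = M" using M by (simp add: sym_posdef_def)
  have ne: "sphere (0::real^'d) 1 \<noteq> {}"
    by (simp add: sphere_def) (metis norm_Basis dist_0_norm Basis_vec_def ex_in_conv nonempty_Basis dist_commute)
  obtain x0 where x0: "x0 \<in> sphere 0 1" and mx: "\<And>y. y \<in> sphere 0 1 \<Longrightarrow> bf M y y \<le> bf M x0 x0"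
    using continuous_attains_sup[OF compact_sphere ne continuous_on_bf[of _ M]] by blast
  define lam where "lam = bf M x0 x0"
  have nx0: "norm x0 = 1" using x0 by simp
  have x0nz: "x0 \<noteq> 0" using nx0 by auto
  have lampos: "lam > 0" using bf_pos[OF M x0nz] by (simp add: lam_def)
  have bound: "bf M x x \<le> lam * (norm x)\<^sup>2" for x
  proof (cases "x = 0")
    case True then show ?thesis by simp
  next
    case False
    define u where "u = (1 / norm x) *\<^sub>R x"
    have "u \<in> sphere 0 1" using False by (simp add: u_def)
    then have "bf M u u \<le> lam" using mx lam_def by blast
    moreover have "x = norm x *\<^sub>R u" using False by (simp add: u_def)
    then have "bf M x x = (norm x)\<^sup>2 * bf M u u"
      by (metis bf_scale_left bf_scale_right mult.assoc power2_eq_square)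
    ultimately show ?thesis using mult_right_mono[of "bf M u u" lam "(norm x)\<^sup>2"] by (simp add: mult.commute)
  qed
  have orth: "(M *v x0 - lam *\<^sub>R x0) \<bullet> h = 0" for h
  proof (rule ccontr)
    define a where "a = (M *v x0 - lam *\<^sub>R x0) \<bullet> h"
    define b where "b = bf M h h - lam * (norm h)\<^sup>2"
    assume "a \<noteq> 0"
    have b0: "b \<le> 0" using bound[of h] by (simp add: b_def)
    have key: "2 * t * a + t^2 * b \<le> 0" for t
    proof -
      have "bf M (x0 + t *\<^sub>R h) (x0 + t *\<^sub>R h) \<le> lam * (norm (x0 + t *\<^sub>R h))\<^sup>2" by (rule bound)
      moreover have "bf M (x0 + t *\<^sub>R h) (x0 + t *\<^sub>R h) = lam + 2 * t * bf M x0 h + t^2 * bf M h h"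
        using bf_sym[OF sym, of h x0]
        by (simp add: bf_add_left bf_add_right bf_scale_left bf_scale_right lam_def power2_eq_square algebra_simps)
      moreover have "(norm (x0 + t *\<^sub>R h))\<^sup>2 = 1 + 2 * t * (x0 \<bullet> h) + t^2 * (norm h)\<^sup>2"
      proof -
        have i1: "x0 \<bullet> x0 = 1" using nx0 by (metis power2_norm_eq_inner power_one)
        show ?thesis unfolding power2_norm_eq_inner
          by (simp add: inner_add_left inner_add_right i1 inner_commute[of h x0] power2_eq_square algebra_simps)
      qed
      moreover have "bf M x0 h = (M *v x0) \<bullet> h"
        using bf_sym[OF sym, of x0 h] by (simp add: bf_def inner_commute)
      ultimately show ?thesis by (simp add: a_def b_def inner_diff_left algebra_simps)
    qed
    define t where "t = a / (1 - b)"
    have pos: "1 - b > 0" using b0 by simp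
    have e1: "2 * a + t * b = a * (2 - b) / (1 - b)"
      using pos by (simp add: t_def field_simps)
    have "2 * t * a + t^2 * b = t * (2 * a + t * b)" by (simp add: power2_eq_square algebra_simps)
    also have "\<dots> = t * (a * (2 - b) / (1 - b))" using e1 by simp
    also have "\<dots> = (a * a) * (2 - b) / ((1 - b) * (1 - b))" by (simp add: t_def)
    also have "\<dots> > 0" using \<open>a \<noteq> 0\<close> b0 pos by (intro divide_pos_pos) (auto simp: zero_less_mult_iff)
    finally have "2 * t * a + t^2 * b > 0" .
    then show False using key[of t] by simp
  qed
  have "M *v x0 - lam *\<^sub>R x0 = 0"
    using orth[of "M *v x0 - lam *\<^sub>R x0"] by simp
  then have "M *v x0 = lam *s x0" by (simp add: scalar_mult_eq_scaleR)
  then show ?thesis using x0nz lampos bound by blast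
qed

lemma eig_finite:
  fixes M :: "real^'d^'d"
  assumes M: "sym_posdef M"
  shows "finite {l. \<exists>v. v \<noteq> 0 \<and> M *v v = l *s v}"
proof -
  define E where "E = {l. \<exists>v. v \<noteq> 0 \<and> M *v v = l *s v}"
  have sym: "transpose M = M" using M by (simp add: sym_posdef_def)
  define ev where "ev l = (SOME v. v \<noteq> 0 \<and> M *v v = l *s v)" for l
  have ev: "ev l \<noteq> 0 \<and> M *v ev l = l *s ev l" if "l \<in> E" for l
  proof -
    from that have "\<exists>v. v \<noteq> 0 \<and> M *v v = l *s v" by (simp add: E_def)
    then show ?thesis unfolding ev_def by (rule someI_ex)
  qed
  have orth: "ev l \<bullet> ev m = 0" if "l \<in> E" "m \<in> E" "l \<noteq> m" for l m
  proof -
    have e1: "M *v ev l = l *\<^sub>R ev l" using ev[OF that(1)] by (simp add: scalar_mult_eq_scaleR)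
    have e2: "M *v ev m = m *\<^sub>R ev m" using ev[OF that(2)] by (simp add: scalar_mult_eq_scaleR)
    have "l * (ev l \<bullet> ev m) = bf M (ev m) (ev l)"
      unfolding bf_def e1 by (simp add: inner_commute)
    also have "\<dots> = bf M (ev l) (ev m)" by (rule bf_sym[OF sym])
    also have "\<dots> = m * (ev l \<bullet> ev m)"
      unfolding bf_def e2 by simp
    finally have "(l - m) * (ev l \<bullet> ev m) = 0" by (simp add: algebra_simps)
    then show ?thesis using that(3) by simp
  qed
  have inj: "inj_on ev E"
  proof (rule inj_onI)
    fix l m assume lm: "l \<in> E" "m \<in> E" "ev l = ev m"
    show "l = m"
    proof (rule ccontr)
      assume "l \<noteq> m"
      then have "ev l \<bullet> ev l = 0" using orth[OF lm(1,2)] lm(3) by simp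
      then show False using ev[OF lm(1)] by simp
    qed
  qed
  have "pairwise orthogonal (ev ` E)"
  proof (rule pairwiseI)
    fix a b assume "a \<in> ev ` E" "b \<in> ev ` E" "a \<noteq> b"
    then obtain l m where "l \<in> E" "m \<in> E" "a = ev l" "b = ev m" by blast
    then show "orthogonal a b" unfolding orthogonal_def using orth \<open>a \<noteq> b\<close> by blast
  qed
  moreover have "0 \<notin> ev ` E"
  proof
    assume "0 \<in> ev ` E"
    then obtain l where "l \<in> E" "0 = ev l" by blast
    then show False using ev[of l] by simp
  qed
  ultimately have "independent (ev ` E)" by (rule pairwise_orthogonal_independent)
  then have "finite (ev ` E)" by (rule finiteI_independent)
  then show ?thesis using inj finite_imageD unfolding E_def by blast
qed

lemma c1_props:
  fixes M :: "real^'d^'d"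
  assumes M: "sym_posdef M"
  shows "c1 M > 0" "\<And>x. Mnorm M x \<le> c1 M * norm x"
proof -
  obtain lam v where v: "v \<noteq> 0" "M *v v = lam *s v" "lam > 0" and b: "\<And>x. bf M x x \<le> lam * (norm x)\<^sup>2"
    using rayleigh_max[OF M] by blast
  have "lam \<in> {l. \<exists>v. v \<noteq> 0 \<and> M *v v = l *s v}" using v by blast
  then have "lam \<le> max_eig M" unfolding max_eig_def using eig_finite[OF M] by (rule Max_ge[rotated])
  then have le: "sqrt lam \<le> c1 M" unfolding c1_def by simp
  show "c1 M > 0" using le v(3) by (meson less_le_trans real_sqrt_gt_zero)
  fix x
  have "Mnorm M x \<le> sqrt (lam * (norm x)\<^sup>2)" unfolding Mnorm_bf by (rule real_sqrt_le_mono[OF b])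
  also have "\<dots> = sqrt lam * norm x" by (simp add: real_sqrt_mult)
  also have "\<dots> \<le> c1 M * norm x" using le by (simp add: mult_right_mono)
  finally show "Mnorm M x \<le> c1 M * norm x" .
qed

lemma rayleigh_min:
  fixes M :: "real^'d^'d"
  assumes M: "sym_posdef M"
  shows "\<exists>mu>0. \<forall>x. mu * (norm x)\<^sup>2 \<le> bf M x x"
proof -
  have ne: "sphere (0::real^'d) 1 \<noteq> {}"
    by (simp add: sphere_def) (metis norm_Basis dist_0_norm Basis_vec_def ex_in_conv nonempty_Basis dist_commute)
  obtain x0 where x0: "x0 \<in> sphere 0 1" and mx: "\<And>y. y \<in> sphere 0 1 \<Longrightarrow> bf M x0 x0 \<le> bf M y y"
    using continuous_attains_inf[OF compact_sphere ne continuous_on_bf[of _ M]] by blast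
  define mu where "mu = bf M x0 x0"
  have x0nz: "x0 \<noteq> 0" using x0 by auto
  have mupos: "mu > 0" using bf_pos[OF M x0nz] by (simp add: mu_def)
  have "mu * (norm x)\<^sup>2 \<le> bf M x x" for x
  proof (cases "x = 0")
    case True then show ?thesis by simp
  next
    case False
    define u where "u = (1 / norm x) *\<^sub>R x"
    have "u \<in> sphere 0 1" using False by (simp add: u_def)
    then have "mu \<le> bf M u u" using mx mu_def by blast
    moreover have "x = norm x *\<^sub>R u" using False by (simp add: u_def)
    then have "bf M x x = (norm x)\<^sup>2 * bf M u u"
      by (metis bf_scale_left bf_scale_right mult.assoc power2_eq_square)
    ultimately show ?thesis using mult_right_mono[of mu "bf M u u" "(norm x)\<^sup>2"] by (simp add: mult.commute)
  qed
  then show ?thesis using mupos by blast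
qed


lemma picard_local:
  fixes F :: "'a::euclidean_space \<Rightarrow> 'a" and y0 :: 'a
  assumes eps: "\<epsilon> > 0"
    and contF: "continuous_on (cball y0 \<epsilon>) F"
    and lipF: "\<And>a b. a \<in> cball y0 \<epsilon> \<Longrightarrow> b \<in> cball y0 \<epsilon> \<Longrightarrow> norm (F a - F b) \<le> K * norm (a - b)"
    and K: "K \<ge> 0"
  shows "\<exists>h>0. \<exists>y. y 0 = y0 \<and> (\<forall>t\<in>{0..h}. y t \<in> cball y0 \<epsilon> \<and>
            (y has_vector_derivative F (y t)) (at t within {0..h}))"
proof -
  define C where "C = cball y0 \<epsilon>"
  have C: "compact C" "convex C" "closed C" "C \<noteq> {}" using eps by (auto simp: C_def)
  obtain B where B: "B > 0" "\<And>a. a \<in> C \<Longrightarrow> norm (F a) \<le> B"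
  proof -
    have "bounded (F ` C)" using compact_continuous_image[OF contF] C(1) by (simp add: C_def compact_imp_bounded)
    then obtain B0 where "\<And>a. a \<in> C \<Longrightarrow> norm (F a) \<le> B0" by (auto simp: bounded_iff)
    then show ?thesis using that[of "\<bar>B0\<bar> + 1"] by fastforce
  qed
  define P where "P = closest_point C"
  have P_in: "P a \<in> C" for a using closest_point_in_set[OF C(3,4)] by (simp add: P_def)
  have P_lip: "dist (P a) (P b) \<le> dist a b" for a b
    using closest_point_lipschitz[OF C(2,3,4)] by (simp add: P_def)
  have P_id: "a \<in> C \<Longrightarrow> P a = a" for a by (simp add: P_def closest_point_self)
  have contP: "continuous_on UNIV P"
  proof (rule lipschitz_on_continuous_on)
    show "1-lipschitz_on UNIV P" by (rule lipschitz_onI) (use P_lip in auto)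
  qed
  define G where "G = F \<circ> P"
  have contG: "continuous_on UNIV G"
    unfolding G_def using continuous_on_compose[OF contP continuous_on_subset[OF contF]] P_in
    by (auto simp: C_def image_subset_iff)
  have G_bound: "norm (G a) \<le> B" for a using B(2)[OF P_in] by (simp add: G_def)
  have G_lip: "norm (G a - G b) \<le> K * norm (a - b)" for a b
  proof -
    have "norm (G a - G b) \<le> K * norm (P a - P b)"
      using lipF P_in by (simp add: G_def C_def)
    also have "\<dots> \<le> K * norm (a - b)" using P_lip[of a b] K by (simp add: dist_norm mult_left_mono)
    finally show ?thesis .
  qed
  define h where "h = min (\<epsilon> / B) (1 / (2 * K + 2))"
  have h: "h > 0" "h * B \<le> \<epsilon>" "K * h \<le> 1 / 2"
  proof -
    show "h > 0" using eps B K by (simp add: h_def)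
    show "h * B \<le> \<epsilon>" using B unfolding h_def by (simp add: min_def field_simps)
    have "K * h \<le> K * (1 / (2 * K + 2))" using K by (intro mult_left_mono) (auto simp: h_def)
    also have "\<dots> \<le> 1 / 2" using K by (simp add: field_simps)
    finally show "K * h \<le> 1 / 2" .
  qed
  define u where "u t = max 0 (min h t)" for t :: real
  have u: "u t \<in> {0..h}" for t using h by (auto simp: u_def)
  have u_id: "t \<in> {0..h} \<Longrightarrow> u t = t" for t by (auto simp: u_def)
  have contu: "continuous_on UNIV u" unfolding u_def by (intro continuous_intros)
  define Phi0 where "Phi0 f = (\<lambda>t. y0 + integral {0..u t} (\<lambda>s. G (apply_bcontfun f s)))" for f :: "real \<Rightarrow>\<^sub>C 'a"
  have contGf: "continuous_on UNIV (\<lambda>s. G (apply_bcontfun f s))" for f :: "real \<Rightarrow>\<^sub>C 'a"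
    by (rule continuous_on_compose2[OF contG]) auto
  have int_bound: "norm (integral {0..x} (\<lambda>s. G (apply_bcontfun f s))) \<le> B * x" if "x \<ge> 0" for f x
    using integral_bound[OF that continuous_on_subset[OF contGf] G_bound] by simp
  have Phi0_bc: "Phi0 f \<in> bcontfun" for f
  proof (rule bcontfun_normI)
    have "continuous_on {0..h} (\<lambda>x. integral {0..x} (\<lambda>s. G (apply_bcontfun f s)))"
      by (rule indefinite_integral_continuous_1, rule integrable_continuous_real, rule continuous_on_subset[OF contGf]) auto
    then have "continuous_on UNIV (\<lambda>t. integral {0..u t} (\<lambda>s. G (apply_bcontfun f s)))"
      using continuous_on_compose2[OF _ contu, of "{0..h}"] u by blast
    then show "continuous_on UNIV (Phi0 f)" unfolding Phi0_def by (intro continuous_intros)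
    fix t
    have "norm (Phi0 f t) \<le> norm y0 + norm (integral {0..u t} (\<lambda>s. G (apply_bcontfun f s)))"
      unfolding Phi0_def by (rule norm_triangle_ineq)
    also have "\<dots> \<le> norm y0 + B * u t" using int_bound[of "u t" f] u[of t] by simp
    also have "\<dots> \<le> norm y0 + B * h" using u[of t] B by simp
    finally show "norm (Phi0 f t) \<le> norm y0 + B * h" .
  qed
  define Phi where "Phi f = Bcontfun (Phi0 f)" for f
  have Phi_apply: "apply_bcontfun (Phi f) t = Phi0 f t" for f t
    using Phi0_bc[of f] by (simp add: Phi_def Bcontfun_inverse)
  have contr: "dist (Phi f) (Phi g) \<le> (1/2) * dist f g" for f g
  proof (rule dist_bound)
    fix t
    have cf: "continuous_on {0..u t} (\<lambda>s. G (apply_bcontfun f s))" "continuous_on {0..u t} (\<lambda>s. G (apply_bcontfun g s))"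
      using continuous_on_subset[OF contGf] by auto
    have "Phi0 f t - Phi0 g t = integral {0..u t} (\<lambda>s. G (apply_bcontfun f s) - G (apply_bcontfun g s))"
      unfolding Phi0_def using integral_diff[OF integrable_continuous_real[OF cf(1)] integrable_continuous_real[OF cf(2)]]
      by simp
    also have "norm \<dots> \<le> (K * dist f g) * (u t - 0)"
    proof (rule integral_bound)
      show "0 \<le> u t" using u[of t] by simp
      show "continuous_on {0..u t} (\<lambda>s. G (apply_bcontfun f s) - G (apply_bcontfun g s))"
        using cf by (intro continuous_intros)
      fix s
      have "norm (G (apply_bcontfun f s) - G (apply_bcontfun g s)) \<le> K * norm (apply_bcontfun f s - apply_bcontfun g s)"
        by (rule G_lip)
      also have "\<dots> \<le> K * dist f g" using dist_bounded[of f s g] K by (simp add: dist_norm mult_left_mono)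
      finally show "norm (G (apply_bcontfun f s) - G (apply_bcontfun g s)) \<le> K * dist f g" .
    qed
    also have "\<dots> \<le> (K * h) * dist f g" using mult_left_mono[of "u t" h "K * dist f g"] u[of t] K by (simp add: algebra_simps)
    also have "\<dots> \<le> (1/2) * dist f g" using mult_right_mono[OF h(3) zero_le_dist[of f g]] by simp
    finally show "dist (apply_bcontfun (Phi f) t) (apply_bcontfun (Phi g) t) \<le> (1/2) * dist f g"
      by (simp add: Phi_apply dist_norm)
  qed
  have "\<exists>!x. Phi x = x" by (rule banach_fix_type[of "1/2"]) (use contr in auto)
  then obtain Y where Y: "Phi Y = Y" by blast
  define y where "y = apply_bcontfun Y"
  define Gy where "Gy = (\<lambda>s. G (y s))"
  have yeq: "y t = y0 + integral {0..u t} Gy" for t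
    using Phi_apply[of Y t] Y by (simp add: y_def Phi0_def Gy_def)
  have y_in: "y t \<in> C" if "t \<in> {0..h}" for t
  proof -
    have "norm (y t - y0) = norm (integral {0..u t} Gy)" using yeq[of t] by simp
    also have "\<dots> \<le> B * u t" using int_bound[of "u t" Y] u[of t] by (simp add: y_def Gy_def)
    also have "\<dots> \<le> B * h" using u[of t] B by simp
    also have "\<dots> \<le> \<epsilon>" using h(2) by (simp add: mult.commute)
    finally show ?thesis by (simp add: C_def dist_norm norm_minus_commute)
  qed
  have contGy: "continuous_on {0..h} Gy" unfolding y_def Gy_def using continuous_on_subset[OF contGf] by blast
  have deriv: "(y has_vector_derivative F (y t)) (at t within {0..h})" if t: "t \<in> {0..h}" for t
  proof -
    have "((\<lambda>t. y0 + integral {0..t} Gy) has_vector_derivative Gy t) (at t within {0..h})"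
      using integral_has_vector_derivative[OF contGy t] by (intro derivative_eq_intros) auto
    then have "(y has_vector_derivative Gy t) (at t within {0..h})"
    proof (rule has_vector_derivative_transform_within[where d=1])
      fix x' assume "x' \<in> {0..h}"
      then show "y0 + integral {0..x'} Gy = y x'" using yeq[of x'] u_id[of x'] by simp
    qed (use t in auto)
    moreover have "Gy t = F (y t)" using y_in[OF t] P_id by (simp add: G_def Gy_def)
    ultimately show ?thesis by simp
  qed
  have "y 0 = y0" using yeq[of 0] u_id[of 0] h by simp
  then show ?thesis using h(1) y_in deriv unfolding C_def by blast
qed


lemma Mnorm_scale: assumes "sym_posdef M" shows "Mnorm M (a *\<^sub>R x) = \<bar>a\<bar> * Mnorm M x"
proof -
  have "Mnorm M (a *\<^sub>R x) = sqrt (a^2 * bf M x x)"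
    by (simp add: Mnorm_bf bf_scale_left bf_scale_right power2_eq_square mult.assoc)
  also have "\<dots> = \<bar>a\<bar> * Mnorm M x" by (simp add: real_sqrt_mult Mnorm_bf)
  finally show ?thesis .
qed

lemma continuous_on_bf2: assumes "continuous_on S f" "continuous_on S g" shows "continuous_on S (\<lambda>x. bf M (f x) (g x))"
proof -
  have "continuous_on S (\<lambda>x. M *v g x)"
    using continuous_on_compose2[OF matrix_vector_mult_linear_continuous_on[of UNIV M] assms(2)] by auto
  then show ?thesis unfolding bf_def using assms(1) by (intro continuous_intros)
qed

lemma has_derivative_bf:
  fixes y :: "real \<Rightarrow> real^'d"
  assumes yd: "(y has_vector_derivative v) (at 0 within {0..h})"
  shows "((\<lambda>s. bf M (y s - c) (y s - c)) has_derivative (\<lambda>t. bf M (y 0 - c) (t *\<^sub>R v) + bf M (t *\<^sub>R v) (y 0 - c))) (at 0 within {0..h})"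
proof -
  have yd': "(y has_derivative (\<lambda>t. t *\<^sub>R v)) (at 0 within {0..h})" using yd by (simp add: has_vector_derivative_def)
  have lin: "bounded_linear ((*v) M)" by (simp add: bounded_linear_intros matrix_vector_mult_linear_continuous_at linear_conv_bounded_linear)
  show ?thesis unfolding bf_def
    by (rule derivative_eq_intros has_derivative_inner yd' lin[THEN bounded_linear.has_derivative] refl | simp)+
qed

locale setting =
  fixes Shat :: "(real^'d) set" and JJ :: "(int^'d) set"
    and r :: "int^'d \<Rightarrow> real^'d \<Rightarrow> real" and Dr :: "int^'d \<Rightarrow> real^'d \<Rightarrow> real^'d"
    and c :: "real^'d" and M :: "real^'d^'d" and \<rho> \<delta>0 :: real
  assumes JJ_fin: "finite JJ"
    and r_deriv: "\<And>J y. J \<in> JJ \<Longrightarrow> y \<in> Shat \<Longrightarrow>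
                    (r J has_derivative (\<lambda>h. Dr J y \<bullet> h)) (at y within Shat)"
    and r_C1: "\<And>J. J \<in> JJ \<Longrightarrow> continuous_on Shat (Dr J)"
    and rho_pos: "\<rho> > 0"
    and M_spd: "sym_posdef M"
    and delta0_pos: "\<delta>0 > 0"
    and ball0: "MBall M c \<delta>0 \<subseteq> Shat"
    and contract_c: "\<And>T y. ode_sol (drift JJ r) Shat T y \<Longrightarrow> Mnorm M (y 0 - c) \<le> \<delta>0 \<Longrightarrow>
        \<forall>t\<in>{0..T}. \<exists>D. ((\<lambda>s. Mnorm M (y s - c)) has_real_derivative D) (at t within {0..T})
                       \<and> D \<le> - \<rho> * Mnorm M (y t - c)"
begin

abbreviation "F \<equiv> drift JJ r"

lemma r_cont: "J \<in> JJ \<Longrightarrow> continuous_on Shat (r J)"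
  by (rule has_derivative_continuous_on[where f'="\<lambda>y h. Dr J y \<bullet> h"]) (rule r_deriv)

lemma F_cont: "continuous_on Shat F"
  unfolding drift_def using r_cont by (intro continuous_intros) auto

lemma F_lip:
  assumes sub: "cball y0 \<epsilon> \<subseteq> Shat"
  shows "\<exists>K\<ge>0. \<forall>a\<in>cball y0 \<epsilon>. \<forall>b\<in>cball y0 \<epsilon>. norm (F a - F b) \<le> K * norm (a - b)"
proof -
  have "\<exists>BJ\<ge>0. \<forall>a\<in>cball y0 \<epsilon>. \<forall>b\<in>cball y0 \<epsilon>. \<bar>r J a - r J b\<bar> \<le> BJ * norm (a - b)" if J: "J \<in> JJ" for J
  proof -
    have "continuous_on (cball y0 \<epsilon>) (Dr J)" using continuous_on_subset[OF r_C1[OF J] sub] .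
    then have "bounded (Dr J ` cball y0 \<epsilon>)" by (intro compact_imp_bounded compact_continuous_image) auto
    then obtain B0 where B0: "\<forall>x\<in>cball y0 \<epsilon>. norm (Dr J x) \<le> B0" unfolding bounded_iff by blast
    have "\<bar>r J a - r J b\<bar> \<le> \<bar>B0\<bar> * norm (a - b)" if ab: "a \<in> cball y0 \<epsilon>" "b \<in> cball y0 \<epsilon>" for a b
    proof -
      have "norm (r J a - r J b) \<le> \<bar>B0\<bar> * norm (a - b)"
      proof (rule differentiable_bound[where f'="\<lambda>x h. Dr J x \<bullet> h"])
        show "convex (cball y0 \<epsilon>)" by simp
        show "(r J has_derivative (\<lambda>h. Dr J x \<bullet> h)) (at x within cball y0 \<epsilon>)" if "x \<in> cball y0 \<epsilon>" for x
          using has_derivative_subset[OF r_deriv[OF J] sub] that sub by blast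
        show "onorm (\<lambda>h. Dr J x \<bullet> h) \<le> \<bar>B0\<bar>" if "x \<in> cball y0 \<epsilon>" for x
        proof -
          have "onorm (\<lambda>h. Dr J x \<bullet> h) \<le> norm (Dr J x)"
            by (rule onorm_le) (simp add: Cauchy_Schwarz_ineq2)
          also have "\<dots> \<le> \<bar>B0\<bar>" using B0 that by force
          finally show ?thesis .
        qed
      qed (use ab in auto)
      then show ?thesis by simp
    qed
    then show ?thesis by (intro exI[of _ "\<bar>B0\<bar>"]) auto
  qed
  then obtain BJ where BJ: "\<And>J. J \<in> JJ \<Longrightarrow> BJ J \<ge> 0 \<and> (\<forall>a\<in>cball y0 \<epsilon>. \<forall>b\<in>cball y0 \<epsilon>. \<bar>r J a - r J b\<bar> \<le> BJ J * norm (a - b))"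
    by metis
  define K where "K = (\<Sum>J\<in>JJ. BJ J * norm (rvec J))"
  have K0: "K \<ge> 0" unfolding K_def using BJ by (intro sum_nonneg) auto
  have "norm (F a - F b) \<le> K * norm (a - b)" if ab: "a \<in> cball y0 \<epsilon>" "b \<in> cball y0 \<epsilon>" for a b
  proof -
    have "F a - F b = (\<Sum>J\<in>JJ. (r J a - r J b) *\<^sub>R rvec J)"
      by (simp add: drift_def sum_subtractf scaleR_diff_left)
    also have "norm \<dots> \<le> (\<Sum>J\<in>JJ. norm ((r J a - r J b) *\<^sub>R rvec J))" by (rule norm_sum)
    also have "\<dots> \<le> (\<Sum>J\<in>JJ. (BJ J * norm (a - b)) * norm (rvec J))"
      using BJ ab by (intro sum_mono) (auto intro: mult_right_mono)
    also have "\<dots> = K * norm (a - b)" unfolding K_def sum_distrib_right by (simp add: mult_ac)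
    finally show ?thesis .
  qed
  then show ?thesis using K0 by blast
qed

lemma open_U: "open {y. Mnorm M (y - c) < \<delta>0}"
proof -
  have "continuous_on UNIV (\<lambda>y. Mnorm M (y - c))"
    unfolding Mnorm_bf by (intro continuous_intros continuous_on_bf2)
  then show ?thesis by (rule open_Collect_less[OF _ continuous_on_const])
qed

lemma drift_open:
  assumes y0: "Mnorm M (y0 - c) < \<delta>0"
  shows "bf M (y0 - c) (F y0) \<le> - \<rho> * (Mnorm M (y0 - c))\<^sup>2"
proof -
  obtain e where e: "e > 0" "ball y0 e \<subseteq> {y. Mnorm M (y - c) < \<delta>0}"
    using open_U y0 by (metis mem_Collect_eq open_contains_ball)
  define \<epsilon> where "\<epsilon> = e / 2"
  have eps: "\<epsilon> > 0" using e by (simp add: \<epsilon>_def)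
  have sub: "cball y0 \<epsilon> \<subseteq> Shat"
  proof -
    have "cball y0 \<epsilon> \<subseteq> ball y0 e" using e by (auto simp: \<epsilon>_def)
    also have "\<dots> \<subseteq> MBall M c \<delta>0" using e(2) by (auto simp: MBall_def)
    finally show ?thesis using ball0 by blast
  qed
  obtain K where K: "K \<ge> 0" "\<And>a b. a \<in> cball y0 \<epsilon> \<Longrightarrow> b \<in> cball y0 \<epsilon> \<Longrightarrow> norm (F a - F b) \<le> K * norm (a - b)"
    using F_lip[OF sub] by blast
  obtain h y where h: "h > 0" and y: "y 0 = y0" "\<And>t. t \<in> {0..h} \<Longrightarrow> y t \<in> cball y0 \<epsilon>"
      "\<And>t. t \<in> {0..h} \<Longrightarrow> (y has_vector_derivative F (y t)) (at t within {0..h})"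
    using picard_local[OF eps continuous_on_subset[OF F_cont sub] K(2) K(1)] by blast
  have ode: "ode_sol F Shat h y" unfolding ode_sol_def using h y sub by blast
  have "0 \<in> {0..h}" using h by simp
  then obtain D where D: "((\<lambda>s. Mnorm M (y s - c)) has_real_derivative D) (at 0 within {0..h})"
      "D \<le> - \<rho> * Mnorm M (y 0 - c)"
    using contract_c[OF ode] y(1) y0 by fastforce
  define w where "w = y0 - c"
  have d1: "((\<lambda>s. bf M (y s - c) (y s - c)) has_real_derivative 2 * D * Mnorm M w) (at 0 within {0..h})"
  proof -
    have "((\<lambda>s. (Mnorm M (y s - c))^2) has_real_derivative 2 * D * Mnorm M w) (at 0 within {0..h})"
      using DERIV_power[OF D(1), of 2] y(1) by (simp add: w_def mult.assoc)
    moreover have "(\<lambda>s. (Mnorm M (y s - c))^2) = (\<lambda>s. bf M (y s - c) (y s - c))"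
      using Mnorm_sq[OF M_spd] by auto
    ultimately show ?thesis by simp
  qed
  have sym: "transpose M = M" using M_spd by (simp add: sym_posdef_def)
  have d2: "((\<lambda>s. bf M (y s - c) (y s - c)) has_real_derivative 2 * bf M w (F y0)) (at 0 within {0..h})"
  proof -
    have "((\<lambda>s. bf M (y s - c) (y s - c)) has_derivative (\<lambda>t. bf M (y 0 - c) (t *\<^sub>R F y0) + bf M (t *\<^sub>R F y0) (y 0 - c))) (at 0 within {0..h})"
      using has_derivative_bf[OF y(3)[OF \<open>0 \<in> {0..h}\<close>]] y(1) by simp
    moreover have "(\<lambda>t. bf M (y 0 - c) (t *\<^sub>R F y0) + bf M (t *\<^sub>R F y0) (y 0 - c)) = (*) (2 * bf M w (F y0))"
      using bf_sym[OF sym, of "F y0" w] by (auto simp: bf_scale_left bf_scale_right y(1) w_def)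
    ultimately show ?thesis by (simp add: has_field_derivative_def)
  qed
  have "2 * D * Mnorm M w = 2 * bf M w (F y0)"
    apply (rule vector_derivative_unique_within_closed_interval[of 0 h 0 "\<lambda>s. bf M (y s - c) (y s - c)"])
    using d1 d2 h by (auto simp: has_real_derivative_iff_has_vector_derivative cbox_interval)
  then have eq: "bf M w (F y0) = D * Mnorm M w" by simp
  have "D * Mnorm M w \<le> (- \<rho> * Mnorm M w) * Mnorm M w"
    using mult_right_mono[OF D(2) Mnorm_nonneg[OF M_spd, of w]] y(1) by (simp add: w_def)
  then show ?thesis using eq by (simp add: w_def power2_eq_square)
qed

lemma drift_closed:
  assumes y0: "Mnorm M (y0 - c) \<le> \<delta>0"
  shows "bf M (y0 - c) (F y0) \<le> - \<rho> * (Mnorm M (y0 - c))\<^sup>2"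
proof -
  define g where "g y = bf M (y - c) (F y) + \<rho> * bf M (y - c) (y - c)" for y
  have contg: "continuous_on Shat g"
    unfolding g_def by (intro continuous_intros continuous_on_bf2 F_cont)
  define a where "a n = 1 - inverse (real (Suc n))" for n :: nat
  define ys where "ys n = c + a n *\<^sub>R (y0 - c)" for n
  have a: "0 \<le> a n" "a n < 1" for n by (auto simp: a_def field_simps)
  have alim: "a \<longlonglongrightarrow> 1" unfolding a_def using LIMSEQ_inverse_real_of_nat_add_minus[of 1] by simp
  have ys_in: "Mnorm M (ys n - c) < \<delta>0" for n
  proof -
    have "Mnorm M (ys n - c) = a n * Mnorm M (y0 - c)" using a[of n] by (simp add: ys_def Mnorm_scale[OF M_spd])
    also have "\<dots> < \<delta>0"
    proof (cases "Mnorm M (y0 - c) = 0")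
      case True then show ?thesis using delta0_pos by simp
    next
      case False
      then have "Mnorm M (y0 - c) > 0" using Mnorm_nonneg[OF M_spd, of "y0 - c"] by simp
      then have "a n * Mnorm M (y0 - c) < Mnorm M (y0 - c)" using a[of n] by simp
      then show ?thesis using y0 by simp
    qed
    finally show ?thesis .
  qed
  have ys_S: "ys n \<in> Shat" for n using ys_in[of n] ball0 by (auto simp: MBall_def)
  have y0_S: "y0 \<in> Shat" using y0 ball0 by (auto simp: MBall_def)
  have "ys \<longlonglongrightarrow> c + 1 *\<^sub>R (y0 - c)" unfolding ys_def by (intro tendsto_intros alim)
  then have lim: "ys \<longlonglongrightarrow> y0" by simp
  have "(\<lambda>n. g (ys n)) \<longlonglongrightarrow> g y0"
    by (rule continuous_on_tendsto_compose[OF contg lim y0_S]) (use ys_S in auto)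
  moreover have "g (ys n) \<le> 0" for n
    using drift_open[OF ys_in[of n]] Mnorm_sq[OF M_spd, of "ys n - c"] by (simp add: g_def)
  ultimately have "g y0 \<le> 0" by (intro LIMSEQ_le_const2[where X="\<lambda>n. g (ys n)"]) auto
  then show ?thesis using Mnorm_sq[OF M_spd, of "y0 - c"] by (simp add: g_def)
qed

end


lemma sum_offdiag_swap:
  assumes "finite A"
  shows "(\<Sum>x\<in>A. \<Sum>y\<in>A - {x}. f x y) = (\<Sum>y\<in>A. \<Sum>x\<in>A - {y}. f x y)"
proof -
  have e: "(\<Sum>y\<in>A - {x}. g y) = (\<Sum>y\<in>A. if y = x then 0 else g y)" if "x \<in> A" for x and g :: "'a \<Rightarrow> 'b"
    using assms that by (simp add: sum.If_cases Diff_eq Int_commute)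
  have "(\<Sum>x\<in>A. \<Sum>y\<in>A - {x}. f x y) = (\<Sum>x\<in>A. \<Sum>y\<in>A. if y = x then 0 else f x y)"
    by (rule sum.cong[OF refl]) (rule e)
  also have "\<dots> = (\<Sum>y\<in>A. \<Sum>x\<in>A. if y = x then 0 else f x y)" by (rule sum.swap)
  also have "\<dots> = (\<Sum>y\<in>A. \<Sum>x\<in>A - {y}. f x y)"
    by (rule sum.cong[OF refl]) (subst e, auto intro!: sum.cong)
  finally show ?thesis .
qed

lemma stationary_gen_zero:
  assumes st: "stationary XX q p" and fin: "finite XX"
  shows "(\<Sum>x\<in>XX. p x * (\<Sum>y\<in>XX - {x}. q x y * (V y - V x))) = 0"
proof -
  have bal: "\<And>x. x \<in> XX \<Longrightarrow> p x * (\<Sum>y\<in>XX - {x}. q x y) = (\<Sum>y\<in>XX - {x}. p y * q y x)"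
    using st by (simp add: stationary_def)
  have "(\<Sum>x\<in>XX. p x * (\<Sum>y\<in>XX - {x}. q x y * (V y - V x)))
      = (\<Sum>x\<in>XX. \<Sum>y\<in>XX - {x}. p x * q x y * V y) - (\<Sum>x\<in>XX. V x * (p x * (\<Sum>y\<in>XX - {x}. q x y)))"
    by (simp add: sum_distrib_left sum_subtractf algebra_simps flip: sum.distrib)
  also have "(\<Sum>x\<in>XX. \<Sum>y\<in>XX - {x}. p x * q x y * V y) = (\<Sum>y\<in>XX. \<Sum>x\<in>XX - {y}. p x * q x y * V y)"
    by (rule sum_offdiag_swap[OF fin])
  also have "\<dots> = (\<Sum>y\<in>XX. V y * (\<Sum>x\<in>XX - {y}. p x * q x y))"
    by (simp add: sum_distrib_left mult_ac)
  also have "(\<Sum>x\<in>XX. V x * (p x * (\<Sum>y\<in>XX - {x}. q x y))) = (\<Sum>x\<in>XX. V x * (\<Sum>y\<in>XX - {x}. p y * q y x))"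
    using bal by (intro sum.cong) auto
  finally show ?thesis by simp
qed

lemma lyap_tail:
  fixes p :: "'a \<Rightarrow> real" and \<psi> :: "'a \<Rightarrow> real"
  assumes st: "stationary XX q p" and fin: "finite XX"
    and th: "\<theta> > 0" and kap: "\<kappa> > 0"
    and gen: "\<And>x. x \<in> XX \<Longrightarrow> (\<Sum>y\<in>XX - {x}. q x y * (exp (\<theta> * \<psi> y) - exp (\<theta> * \<psi> x)))
                  \<le> \<kappa> * exp (\<theta> * \<psi> x) * (m - \<psi> x)"
    and psi0: "\<And>x. x \<in> XX \<Longrightarrow> 0 \<le> \<psi> x"
    and a: "a > 0" and m: "0 \<le> m" "m \<le> a / 2"
  shows "(\<Sum>x\<in>{x\<in>XX. \<psi> x > a}. p x) \<le> exp (- \<theta> * a / 2)"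
proof -
  define V where "V x = exp (\<theta> * \<psi> x)" for x
  have p0: "\<And>x. 0 \<le> p x" and p1: "sum p XX = 1" using st by (auto simp: stationary_def)
  have "0 = (\<Sum>x\<in>XX. p x * (\<Sum>y\<in>XX - {x}. q x y * (V y - V x)))"
    using stationary_gen_zero[OF st fin] by simp
  also have "\<dots> \<le> (\<Sum>x\<in>XX. p x * (\<kappa> * V x * (m - \<psi> x)))"
    using gen p0 by (intro sum_mono mult_left_mono) (auto simp: V_def)
  finally have "0 \<le> \<kappa> * (\<Sum>x\<in>XX. p x * V x * (m - \<psi> x))"
    by (simp add: sum_distrib_left mult_ac)
  then have S0: "0 \<le> (\<Sum>x\<in>XX. p x * V x * (m - \<psi> x))"
    using kap by (simp add: zero_le_mult_iff)
  have "(\<Sum>x\<in>XX. p x * V x * (\<psi> x - m)) = - (\<Sum>x\<in>XX. p x * V x * (m - \<psi> x))"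
    by (simp add: sum_negf[symmetric] algebra_simps)
  with S0 have S: "(\<Sum>x\<in>XX. p x * V x * (\<psi> x - m)) \<le> 0" by linarith
  define A where "A = {x\<in>XX. \<psi> x > a}"
  have termb: "p x * V x * (\<psi> x - m) \<ge> (if x \<in> A then p x * (exp (\<theta> * a) * (a / 2)) else - (p x * (exp (\<theta> * m) * m)))"
    if x: "x \<in> XX" for x
  proof (cases "x \<in> A")
    case True
    then have "\<psi> x > a" by (simp add: A_def)
    then have "exp (\<theta> * a) \<le> V x" "a / 2 \<le> \<psi> x - m" using th m by (auto simp: V_def)
    then have "exp (\<theta> * a) * (a / 2) \<le> V x * (\<psi> x - m)" using a by (intro mult_mono) (auto simp: V_def)
    then show ?thesis using True p0[of x] by (simp add: mult_left_mono mult.assoc)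
  next
    case False
    have "- (exp (\<theta> * m) * m) \<le> V x * (\<psi> x - m)"
    proof (cases "\<psi> x \<ge> m")
      case True
      have "0 \<le> V x * (\<psi> x - m)" using True by (simp add: V_def)
      moreover have "0 \<le> exp (\<theta> * m) * m" using m by simp
      ultimately show ?thesis by linarith
    next
      case False
      then have "V x \<le> exp (\<theta> * m)" using th by (simp add: V_def)
      moreover have "m - \<psi> x \<le> m" using psi0[OF x] by simp
      ultimately have "V x * (m - \<psi> x) \<le> exp (\<theta> * m) * m"
        using False by (intro mult_mono) (auto simp: V_def)
      then show ?thesis by (simp add: algebra_simps)
    qed
    then have "p x * (- (exp (\<theta> * m) * m)) \<le> p x * (V x * (\<psi> x - m))"
      by (rule mult_left_mono) (rule p0)
    then show ?thesis using False by (simp add: mult.assoc)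
  qed
  have AX: "A \<subseteq> XX" by (auto simp: A_def)
  have "(\<Sum>x\<in>XX. (if x \<in> A then p x * (exp (\<theta> * a) * (a / 2)) else - (p x * (exp (\<theta> * m) * m))))
      = (\<Sum>x\<in>A. p x) * (exp (\<theta> * a) * (a / 2)) - (\<Sum>x\<in>XX - A. p x) * (exp (\<theta> * m) * m)"
  proof -
    have i: "A \<inter> XX = A" using AX by blast
    show ?thesis using fin by (simp add: sum.If_cases sum_distrib_right sum_negf i Diff_eq Int_commute)
  qed
  also have "\<dots> \<ge> (\<Sum>x\<in>A. p x) * (exp (\<theta> * a) * (a / 2)) - exp (\<theta> * m) * m"
  proof -
    have "(\<Sum>x\<in>XX - A. p x) \<le> sum p XX" using fin p0 by (intro sum_mono2) auto
    then have "(\<Sum>x\<in>XX - A. p x) \<le> 1" using p1 by simp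
    then have "(\<Sum>x\<in>XX - A. p x) * (exp (\<theta> * m) * m) \<le> 1 * (exp (\<theta> * m) * m)"
      using m by (intro mult_right_mono) auto
    then show ?thesis by simp
  qed
  finally have "(\<Sum>x\<in>A. p x) * (exp (\<theta> * a) * (a / 2)) - exp (\<theta> * m) * m
      \<le> (\<Sum>x\<in>XX. (if x \<in> A then p x * (exp (\<theta> * a) * (a / 2)) else - (p x * (exp (\<theta> * m) * m))))" .
  also have "\<dots> \<le> (\<Sum>x\<in>XX. p x * V x * (\<psi> x - m))" using termb by (intro sum_mono) auto
  also have "\<dots> \<le> 0" by (rule S)
  finally have main: "(\<Sum>x\<in>A. p x) * (exp (\<theta> * a) * (a / 2)) \<le> exp (\<theta> * m) * m" by simp
  have "exp (\<theta> * m) * m \<le> exp (\<theta> * (a / 2)) * (a / 2)" using m th by (intro mult_mono) auto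
  with main have "(\<Sum>x\<in>A. p x) * (exp (\<theta> * a) * (a / 2)) \<le> exp (\<theta> * (a / 2)) * (a / 2)" by linarith
  then have "(\<Sum>x\<in>A. p x) * exp (\<theta> * a) \<le> exp (\<theta> * (a / 2))" using a by (simp add: mult.assoc[symmetric])
  then have "(\<Sum>x\<in>A. p x) \<le> exp (\<theta> * (a / 2)) / exp (\<theta> * a)" by (simp add: field_simps)
  also have "\<dots> = exp (- \<theta> * a / 2)" by (simp add: exp_diff[symmetric] field_simps)
  finally show ?thesis by (simp add: A_def)
qed


lemma exp_quad: assumes "\<bar>s\<bar> \<le> (1::real)" shows "exp s \<le> 1 + s + s^2"
proof (cases "s \<ge> 0")
  case True then show ?thesis using exp_bound[of s] assms by simp
next
  case False
  have pos: "1 - s > 0" using False by simp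
  have "1 - s \<le> exp (- s)" using exp_ge_add_one_self[of "-s"] by simp
  then have "exp s \<le> 1 / (1 - s)" using pos by (simp add: exp_minus field_simps)
  also have "1 / (1 - s) = 1 + s + s^2 / (1 - s)" using pos by (simp add: field_simps power2_eq_square)
  also have "s^2 / (1 - s) \<le> s^2" using pos False by (simp add: divide_le_eq mult_le_cancel_left1 power2_eq_square)
  finally show ?thesis by simp
qed

lemma sqrt_upper: assumes "a > 0" "a^2 + t \<ge> 0" shows "sqrt (a^2 + t) \<le> a + t / (2 * a)"
proof -
  have "a^2 + t \<le> (a + t / (2 * a))^2"
    using assms(1) by (simp add: power2_eq_square field_simps)
  moreover have "a + t / (2 * a) \<ge> 0"
  proof -
    have "t \<ge> -(a^2)" using assms(2) by simp
    then have "t / (2 * a) \<ge> -(a^2) / (2 * a)" using divide_right_mono[of "-(a^2)" t "2*a"] assms(1) by simp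
    also have "-(a^2) / (2 * a) = - a / 2" using assms(1) by (simp add: power2_eq_square)
    finally show ?thesis using assms(1) by simp
  qed
  ultimately show ?thesis by (metis real_sqrt_le_mono real_sqrt_abs abs_of_nonneg)
qed

lemma rvec_add: "rvec (x + J) = rvec x + rvec J"
  by (simp add: rvec_def vec_eq_iff)

context
  fixes M :: "real^'d^'d" and s :: real
  assumes M: "sym_posdef M" and s: "s > 0"
begin

definition psi :: "real^'d \<Rightarrow> real" where "psi w = sqrt ((Mnorm M w)\<^sup>2 + s\<^sup>2)"

lemma psi_pos: "psi w > 0" using s by (simp add: psi_def add_nonneg_pos)
lemma psi_ge_s: "s \<le> psi w" using s by (simp add: psi_def real_le_rsqrt)
lemma psi_ge_Mnorm: "Mnorm M w \<le> psi w" by (simp add: psi_def real_le_rsqrt)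
lemma psi_sq: "(psi w)\<^sup>2 = (Mnorm M w)\<^sup>2 + s\<^sup>2" by (simp add: psi_def)

lemma psi_step_sq: "(psi (v + J))\<^sup>2 = (psi v)\<^sup>2 + (2 * bf M v J + (Mnorm M J)\<^sup>2)"
  using Mnorm_sq_add[OF M, of v J] by (simp add: psi_sq)

lemma psi_step_upper: "psi (v + J) \<le> psi v + (2 * bf M v J + (Mnorm M J)\<^sup>2) / (2 * psi v)"
proof -
  have "psi (v + J) = sqrt ((psi v)\<^sup>2 + (2 * bf M v J + (Mnorm M J)\<^sup>2))"
    using psi_step_sq[of v J] psi_pos[of "v + J"] by (metis abs_of_pos real_sqrt_abs)
  also have "\<dots> \<le> psi v + (2 * bf M v J + (Mnorm M J)\<^sup>2) / (2 * psi v)"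
    by (rule sqrt_upper[OF psi_pos]) (metis psi_step_sq zero_le_power2)
  finally show ?thesis .
qed

lemma psi_step_abs: "\<bar>psi (v + J) - psi v\<bar> \<le> Mnorm M J"
proof -
  have cs1: "bf M v J \<le> Mnorm M v * Mnorm M J" by (rule bf_CS[OF M])
  have cs2: "- bf M v J \<le> Mnorm M v * Mnorm M J"
    using bf_CS[OF M, of "-v" J] Mnorm_scale[OF M, of "-1" v] by (simp add: bf_scale_left[of M "-1", simplified])
  have mv: "Mnorm M v \<le> psi v" by (rule psi_ge_Mnorm)
  have mJ: "0 \<le> Mnorm M J" by (rule Mnorm_nonneg[OF M])
  have p0: "0 \<le> psi v" "0 \<le> psi (v + J)" using psi_pos by (auto intro: less_imp_le)
  have "(psi (v + J))\<^sup>2 \<le> (psi v + Mnorm M J)\<^sup>2"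
  proof -
    have "bf M v J \<le> psi v * Mnorm M J" using cs1 mv mJ by (meson mult_right_mono order_trans)
    then show ?thesis using psi_step_sq[of v J] by (simp add: power2_eq_square algebra_simps)
  qed
  then have up: "psi (v + J) \<le> psi v + Mnorm M J" using p0 mJ by (meson add_nonneg_nonneg power2_le_imp_le)
  have lo: "psi v - Mnorm M J \<le> psi (v + J)"
  proof (cases "psi v - Mnorm M J \<le> 0")
    case True then show ?thesis using p0 by linarith
  next
    case False
    have "- bf M v J \<le> psi v * Mnorm M J" using cs2 mv mJ by (meson mult_right_mono order_trans)
    then have "(psi v - Mnorm M J)\<^sup>2 \<le> (psi (v + J))\<^sup>2"
      using psi_step_sq[of v J] by (simp add: power2_eq_square algebra_simps)
    then show ?thesis using p0 by (meson power2_le_imp_le)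
  qed
  show ?thesis using up lo by linarith
qed

lemma exp_psi_step:
  assumes th: "\<theta> > 0" and K: "Mnorm M J \<le> K" and thK: "\<theta> * K \<le> 1"
  shows "exp (\<theta> * psi (v + J)) - exp (\<theta> * psi v)
     \<le> exp (\<theta> * psi v) * (\<theta> * ((2 * bf M v J + (Mnorm M J)\<^sup>2) / (2 * psi v)) + \<theta>^2 * K^2)"
proof -
  define \<Delta> where "\<Delta> = psi (v + J) - psi v"
  have d1: "\<bar>\<Delta>\<bar> \<le> K" using psi_step_abs[of v J] K by (simp add: \<Delta>_def)
  have d2: "\<Delta> \<le> (2 * bf M v J + (Mnorm M J)\<^sup>2) / (2 * psi v)" using psi_step_upper[of v J] by (simp add: \<Delta>_def)
  have td: "\<bar>\<theta> * \<Delta>\<bar> \<le> 1"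
  proof -
    have "\<bar>\<theta> * \<Delta>\<bar> = \<theta> * \<bar>\<Delta>\<bar>" using th by (simp add: abs_mult)
    also have "\<dots> \<le> \<theta> * K" using d1 th by (simp add: mult_left_mono)
    finally show ?thesis using thK by simp
  qed
  have "exp (\<theta> * \<Delta>) \<le> 1 + \<theta> * \<Delta> + (\<theta> * \<Delta>)^2" by (rule exp_quad[OF td])
  also have "(\<theta> * \<Delta>)^2 \<le> \<theta>^2 * K^2"
  proof -
    have "(\<theta> * \<Delta>)^2 = \<theta>^2 * \<bar>\<Delta>\<bar>^2" by (simp add: power_mult_distrib)
    also have "\<dots> \<le> \<theta>^2 * K^2" using d1 by (intro mult_left_mono power_mono) auto
    finally show ?thesis .
  qed
  also have "\<theta> * \<Delta> \<le> \<theta> * ((2 * bf M v J + (Mnorm M J)\<^sup>2) / (2 * psi v))" using mult_left_mono[OF d2, of \<theta>] th by simp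
  finally have e: "exp (\<theta> * \<Delta>) - 1 \<le> \<theta> * ((2 * bf M v J + (Mnorm M J)\<^sup>2) / (2 * psi v)) + \<theta>^2 * K^2" by simp
  have "exp (\<theta> * psi (v + J)) - exp (\<theta> * psi v) = exp (\<theta> * psi v) * (exp (\<theta> * \<Delta>) - 1)"
    by (simp add: \<Delta>_def algebra_simps exp_add[symmetric])
  also have "\<dots> \<le> exp (\<theta> * psi v) * (\<theta> * ((2 * bf M v J + (Mnorm M J)\<^sup>2) / (2 * psi v)) + \<theta>^2 * K^2)"
    using e by (simp add: mult_left_mono)
  finally show ?thesis .
qed

end


lemma bf_sum_right: "bf M v (\<Sum>J\<in>A. f J) = (\<Sum>J\<in>A. bf M v (f J))"
  by (induct A rule: infinite_finite_induct) (simp_all add: bf_add_right)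

lemma rvec_eq_0: "rvec x = 0 \<Longrightarrow> x = 0"
  by (simp add: rvec_def vec_eq_iff)

lemma sum_list_nonzero: "sum_list js \<noteq> (0::'a::monoid_add) \<Longrightarrow> \<exists>J\<in>set js. J \<noteq> 0"
  by (induct js) auto

lemma jump_reindex:
  assumes fin: "finite XX" "finite JJ" and x: "x \<in> XX"
  shows "(\<Sum>y\<in>XX - {x}. trunc_rate JJ r N XX x y * (V y - V x))
       = (\<Sum>J\<in>JJ. if x + J \<in> XX - {x} then real N * r J ((1 / real N) *\<^sub>R rvec x) * (V (x + J) - V x) else 0)"
proof -
  define g where "g J = real N * r J ((1 / real N) *\<^sub>R rvec x)" for J
  have "(\<Sum>y\<in>XX - {x}. trunc_rate JJ r N XX x y * (V y - V x))
      = (\<Sum>y\<in>XX - {x}. \<Sum>J\<in>JJ. if x + J = y then g J * (V (x + J) - V x) else 0)"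
  proof (rule sum.cong[OF refl])
    fix y assume y: "y \<in> XX - {x}"
    have "trunc_rate JJ r N XX x y = (\<Sum>J\<in>{J\<in>JJ. x + J = y}. g J)"
      using x y by (simp add: trunc_rate_def g_def)
    also have "\<dots> = (\<Sum>J\<in>JJ. if x + J = y then g J else 0)" using fin(2) by (rule sum.inter_filter)
    finally show "trunc_rate JJ r N XX x y * (V y - V x) = (\<Sum>J\<in>JJ. if x + J = y then g J * (V (x + J) - V x) else 0)"
      by (simp add: sum_distrib_right) (rule sum.cong, auto)
  qed
  also have "\<dots> = (\<Sum>J\<in>JJ. \<Sum>y\<in>XX - {x}. if x + J = y then g J * (V (x + J) - V x) else 0)"
    by (rule sum.swap)
  also have "\<dots> = (\<Sum>J\<in>JJ. if x + J \<in> XX - {x} then g J * (V (x + J) - V x) else 0)"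
    using fin(1) by (intro sum.cong[OF refl]) (simp add: sum.delta')
  finally show ?thesis by (simp only: g_def)
qed


context setting
begin

lemma cont_Mn: "continuous_on UNIV (\<lambda>y. Mnorm M (y - c))"
  unfolding Mnorm_bf by (intro continuous_intros continuous_on_bf2)

lemma compact_MB: "compact (MBall M c \<delta>0)"
proof -
  have cl: "closed (MBall M c \<delta>0)" unfolding MBall_def
    by (rule closed_Collect_le[OF cont_Mn continuous_on_const])
  obtain mu where mu: "mu > 0" "\<And>x. mu * (norm x)\<^sup>2 \<le> bf M x x" using rayleigh_min[OF M_spd] by blast
  have "MBall M c \<delta>0 \<subseteq> cball c (\<delta>0 / sqrt mu)"
  proof
    fix x assume x: "x \<in> MBall M c \<delta>0"
    have "mu * (norm (x - c))\<^sup>2 \<le> (Mnorm M (x - c))\<^sup>2" using mu(2)[of "x - c"] Mnorm_sq[OF M_spd] by simp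
    also have "\<dots> \<le> \<delta>0\<^sup>2" using x Mnorm_nonneg[OF M_spd] by (auto simp: MBall_def intro: power_mono)
    finally have "(norm (x - c))\<^sup>2 \<le> \<delta>0\<^sup>2 / mu" using mu(1) by (simp add: field_simps)
    then have "sqrt ((norm (x - c))\<^sup>2) \<le> sqrt (\<delta>0\<^sup>2 / mu)" by (rule real_sqrt_le_mono)
    then have "norm (x - c) \<le> \<delta>0 / sqrt mu" using delta0_pos by (simp add: real_sqrt_divide)
    then show "x \<in> cball c (\<delta>0 / sqrt mu)" by (simp add: dist_norm norm_minus_commute)
  qed
  then have "bounded (MBall M c \<delta>0)" using bounded_cball bounded_subset by blast
  then show ?thesis using cl by (simp add: compact_eq_bounded_closed)
qed

lemma c_MB: "c \<in> MBall M c \<delta>0" using delta0_pos by (simp add: MBall_def)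

lemma Rstar_ge: assumes "y \<in> MBall M c \<delta>0" shows "(\<Sum>J\<in>JJ. r J y) \<le> Rstar JJ r (MBall M c \<delta>0)"
proof -
  have "continuous_on (MBall M c \<delta>0) (\<lambda>y. \<Sum>J\<in>JJ. r J y)"
    using r_cont continuous_on_subset[OF _ ball0] by (intro continuous_on_sum) blast
  then have "bounded ((\<lambda>y. \<Sum>J\<in>JJ. r J y) ` MBall M c \<delta>0)"
    by (intro compact_imp_bounded compact_continuous_image compact_MB)
  then have bdd: "bdd_above ((\<lambda>y. \<Sum>J\<in>JJ. r J y) ` MBall M c \<delta>0)" by (rule bounded_imp_bdd_above)
  show ?thesis unfolding Rstar_def by (rule cSUP_upper[OF assms bdd])
qed

lemma Lconst_nonneg: "0 \<le> Lconst JJ Dr (MBall M c \<delta>0)"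
proof -
  define g where "g y = (\<Sum>i\<in>UNIV. \<Sum>j\<in>UNIV. \<bar>jac JJ Dr y $ i $ j\<bar>)" for y
  have cD: "continuous_on (MBall M c \<delta>0) (\<lambda>y. Dr J y $ k)" if "J \<in> JJ" for J k
    using continuous_on_subset[OF r_C1[OF that] ball0] by (intro continuous_intros)
  have "continuous_on (MBall M c \<delta>0) g"
    unfolding g_def jac_def using cD continuous_on_subset[OF r_C1 ball0] by (auto intro!: continuous_intros)
  then have "bounded (g ` MBall M c \<delta>0)"
    by (intro compact_imp_bounded compact_continuous_image compact_MB)
  then obtain B where B: "\<forall>y\<in>MBall M c \<delta>0. norm (g y) \<le> B" unfolding bounded_iff by blast
  have bdd: "bdd_above ((\<lambda>y. onorm (\<lambda>h. jac JJ Dr y *v h)) ` MBall M c \<delta>0)"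
  proof (rule bdd_aboveI2)
    fix y assume y: "y \<in> MBall M c \<delta>0"
    have "onorm (\<lambda>h. jac JJ Dr y *v h) \<le> g y" unfolding g_def by (rule onorm_le_matrix_component_sum)
    also have "\<dots> \<le> B" using B y by force
    finally show "onorm (\<lambda>h. jac JJ Dr y *v h) \<le> B" .
  qed
  have nn: "0 \<le> onorm (\<lambda>h. jac JJ Dr c *v h)"
    by (rule onorm_pos_le) (simp add: bounded_linear_intros matrix_vector_mult_linear_continuous_at linear_conv_bounded_linear)
  show ?thesis unfolding Lconst_def by (rule cSUP_upper2[OF bdd c_MB nn])
qed

end


theorem theorem3p7:
  fixes S :: "nat \<Rightarrow> (int^'d) set"
    and Shat :: "(real^'d) set"
    and JJ :: "(int^'d) set"
    and r :: "int^'d \<Rightarrow> real^'d \<Rightarrow> real"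
    and Dr :: "int^'d \<Rightarrow> real^'d \<Rightarrow> real^'d"
    and c :: "real^'d"
    and M :: "real^'d^'d"
    and \<rho> \<delta>0 \<delta>1 r0 :: real
  assumes Shat_closed: "closed Shat"
    and S_scaled: "\<And>N x. N > 0 \<Longrightarrow> x \<in> S N \<Longrightarrow> (1 / real N) *\<^sub>R rvec x \<in> Shat"
    and S_jumps: "\<And>N x J. N > 0 \<Longrightarrow> x \<in> S N \<Longrightarrow> J \<in> JJ \<Longrightarrow>
                    r J ((1 / real N) *\<^sub>R rvec x) > 0 \<Longrightarrow> x + J \<in> S N"
    and JJ_fin: "finite JJ"
    and r_nonneg: "\<And>J y. J \<in> JJ \<Longrightarrow> y \<in> Shat \<Longrightarrow> 0 \<le> r J y"
    and r_deriv: "\<And>J y. J \<in> JJ \<Longrightarrow> y \<in> Shat \<Longrightarrow>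
                    (r J has_derivative (\<lambda>h. Dr J y \<bullet> h)) (at y within Shat)"
    and r_C1: "\<And>J. J \<in> JJ \<Longrightarrow> continuous_on Shat (Dr J)"
    and JJ_gen: "\<And>v. \<exists>js. set js \<subseteq> JJ \<and> sum_list js = v"
    and c_int: "c \<in> interior Shat"
    and F_c: "drift JJ r c = 0"
    and r_c_pos: "\<And>J. J \<in> JJ \<Longrightarrow> r J c > 0"
    and rho_pos: "\<rho> > 0"
    and eig: "\<And>lam. is_eigenvalue (jac JJ Dr c) lam \<Longrightarrow> Re lam < - \<rho>"
    and M_spd: "sym_posdef M"
    and delta0_pos: "\<delta>0 > 0"
    and ball0: "MBall M c \<delta>0 \<subseteq> Shat"
    and contract_c: "\<And>T y. ode_sol (drift JJ r) Shat T y \<Longrightarrow> Mnorm M (y 0 - c) \<le> \<delta>0 \<Longrightarrow>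
        \<forall>t\<in>{0..T}. \<exists>D. ((\<lambda>s. Mnorm M (y s - c)) has_real_derivative D) (at t within {0..T})
                       \<and> D \<le> - \<rho> * Mnorm M (y t - c)"
    and contract_pair: "\<And>T y z. ode_sol (drift JJ r) Shat T y \<Longrightarrow> ode_sol (drift JJ r) Shat T z \<Longrightarrow>
        Mnorm M (y 0 - c) \<le> \<delta>0 \<Longrightarrow> Mnorm M (z 0 - c) \<le> \<delta>0 \<Longrightarrow>
        \<forall>t\<in>{0..T}. \<exists>D. ((\<lambda>s. Mnorm M (y s - z s)) has_real_derivative D) (at t within {0..T})
                       \<and> D \<le> - \<rho> * Mnorm M (y t - z t)"
    and delta1: "0 < \<delta>1" "\<delta>1 \<le> \<delta>0"
    and r0: "r0 > 0" "\<And>J y. J \<in> JJ \<Longrightarrow> y \<in> MBall M c \<delta>1 \<Longrightarrow> r J y > r0"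
  shows "\<And>(N::nat) z \<delta> \<pi>. N > 0 \<Longrightarrow> 0 < z \<Longrightarrow> z < \<delta> \<Longrightarrow> \<delta> \<le> \<delta>1 \<Longrightarrow>
     stationary {X \<in> S N. Mnorm M (rvec X - real N *\<^sub>R c) \<le> real N * \<delta>}
        (trunc_rate JJ r N {X \<in> S N. Mnorm M (rvec X - real N *\<^sub>R c) \<le> real N * \<delta>}) \<pi> \<Longrightarrow>
     (\<Sum>X\<in>{X \<in> S N. Mnorm M (rvec X - real N *\<^sub>R c) \<le> real N * \<delta>
              \<and> Mnorm M (rvec X - real N *\<^sub>R c) > real N * z}. \<pi> X)
       \<le> 2 * zeta CARD('d) N (1 / \<rho>) (Rstar JJ r (MBall M c \<delta>0)) (Jstar JJ)
               ((z * (1 - exp (- 1 / 2)) / (2 * c1 M)) * exp (- Lconst JJ Dr (MBall M c \<delta>0) / \<rho>))"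
proof -
  interpret setting Shat JJ r Dr c M \<rho> \<delta>0
    by (rule setting.intro) (fact JJ_fin r_deriv r_C1 rho_pos M_spd delta0_pos ball0 contract_c)+
  define d where "d = real CARD('d)"
  have d1: "d \<ge> 1" by (simp add: d_def)
  obtain J1 where J1: "J1 \<in> JJ" "J1 \<noteq> 0"
  proof -
    obtain js where js: "set js \<subseteq> JJ" "sum_list js = (\<chi> i. (1::int))" using JJ_gen by blast
    have "(\<chi> i. (1::int)) \<noteq> 0" by (simp add: vec_eq_iff)
    then obtain J where "J \<in> set js" "J \<noteq> 0" using sum_list_nonzero js(2) by metis
    then show ?thesis using that js(1) by blast
  qed
  define Js where "Js = Jstar JJ"
  have Js_ge: "norm (rvec J) \<le> Js" if "J \<in> JJ" for J
    unfolding Js_def Jstar_def using JJ_fin that by (intro Max_ge) auto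
  have Js_pos: "Js > 0"
  proof -
    have "rvec J1 \<noteq> 0" using J1(2) rvec_eq_0 by blast
    then show ?thesis using Js_ge[OF J1(1)] by (meson zero_less_norm_iff order_less_le_trans)
  qed
  have c1pos: "c1 M > 0" and c1b: "\<And>x. Mnorm M x \<le> c1 M * norm x" using c1_props[OF M_spd] by auto
  define K where "K = c1 M * Js"
  have Kpos: "K > 0" using c1pos Js_pos by (simp add: K_def)
  have MnJ: "Mnorm M (rvec J) \<le> K" if "J \<in> JJ" for J
    using c1b[of "rvec J"] Js_ge[OF that] c1pos by (simp add: K_def) (meson mult_left_mono less_imp_le order_trans)
  define R where "R = Rstar JJ r (MBall M c \<delta>0)"
  have Rge: "(\<Sum>J\<in>JJ. r J y) \<le> R" if "y \<in> MBall M c \<delta>0" for y using Rstar_ge[OF that] by (simp add: R_def)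
  have Rpos: "R > 0"
  proof -
    have "0 < (\<Sum>J\<in>JJ. r J c)" using JJ_fin J1(1) r_c_pos by (intro sum_pos) auto
    then show ?thesis using Rge[OF c_MB] by simp
  qed
  define L where "L = Lconst JJ Dr (MBall M c \<delta>0)"
  have L0: "L \<ge> 0" using Lconst_nonneg by (simp add: L_def)
  show "\<And>(N::nat) z \<delta> \<pi>. N > 0 \<Longrightarrow> 0 < z \<Longrightarrow> z < \<delta> \<Longrightarrow> \<delta> \<le> \<delta>1 \<Longrightarrow>
     stationary {X \<in> S N. Mnorm M (rvec X - real N *\<^sub>R c) \<le> real N * \<delta>}
        (trunc_rate JJ r N {X \<in> S N. Mnorm M (rvec X - real N *\<^sub>R c) \<le> real N * \<delta>}) \<pi> \<Longrightarrow>
     (\<Sum>X\<in>{X \<in> S N. Mnorm M (rvec X - real N *\<^sub>R c) \<le> real N * \<delta>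
              \<and> Mnorm M (rvec X - real N *\<^sub>R c) > real N * z}. \<pi> X)
       \<le> 2 * zeta CARD('d) N (1 / \<rho>) (Rstar JJ r (MBall M c \<delta>0)) (Jstar JJ)
               ((z * (1 - exp (- 1 / 2)) / (2 * c1 M)) * exp (- Lconst JJ Dr (MBall M c \<delta>0) / \<rho>))"
  proof -
    fix N :: nat and z \<delta> :: real and \<pi> :: "int^'d \<Rightarrow> real"
    assume N: "N > 0" and z: "0 < z" and zd: "z < \<delta>" and dd: "\<delta> \<le> \<delta>1"
      and st0: "stationary {X \<in> S N. Mnorm M (rvec X - real N *\<^sub>R c) \<le> real N * \<delta>}
        (trunc_rate JJ r N {X \<in> S N. Mnorm M (rvec X - real N *\<^sub>R c) \<le> real N * \<delta>}) \<pi>"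
    define XX where "XX = {X \<in> S N. Mnorm M (rvec X - real N *\<^sub>R c) \<le> real N * \<delta>}"
    have st: "stationary XX (trunc_rate JJ r N XX) \<pi>" using st0 by (simp add: XX_def)
    have p0: "\<And>x. 0 \<le> \<pi> x" and p1: "sum \<pi> XX = 1" using st by (auto simp: stationary_def)
    have finXX: "finite XX" using p1 by (metis sum.infinite zero_neq_one)
    define A0 where "A0 = {X \<in> S N. Mnorm M (rvec X - real N *\<^sub>R c) \<le> real N * \<delta>
              \<and> Mnorm M (rvec X - real N *\<^sub>R c) > real N * z}"
    have A0X: "A0 \<subseteq> XX" by (auto simp: A0_def XX_def)
    have LHS1: "sum \<pi> A0 \<le> 1"
    proof -
      have "sum \<pi> A0 \<le> sum \<pi> XX" using finXX A0X p0 by (intro sum_mono2) auto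
      then show ?thesis using p1 by simp
    qed
    define w where "w = (z * (1 - exp (- 1 / 2)) / (2 * c1 M)) * exp (- L / \<rho>)"
    have e12: "exp (- 1 / 2 :: real) \<ge> 1 / 2" using exp_ge_add_one_self[of "- 1 / 2 :: real"] by simp
    have e12b: "exp (- 1 / 2 :: real) \<le> 1" by simp
    have eL: "exp (- L / \<rho>) \<le> 1" "exp (- L / \<rho>) > 0" using L0 rho_pos by auto
    have w0: "0 \<le> w" using z c1pos e12b eL by (simp add: w_def)
    have wle: "w \<le> z / (4 * c1 M)"
    proof -
      have "w \<le> z * (1 - exp (- 1 / 2)) / (2 * c1 M)"
        using eL z c1pos e12b unfolding w_def by (intro mult_left_le) (auto intro!: divide_nonneg_pos)
      also have "\<dots> \<le> z * (1 / 2) / (2 * c1 M)"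
        using e12 z c1pos by (intro divide_right_mono mult_left_mono) auto
      finally show ?thesis by simp
    qed
    define X1 where "X1 = real N * w / (2 * d * Js)"
    define X2 where "X2 = w / (d * exp 1 * (1 / \<rho>) * R * Js)"
    define E where "E = X1 * min 1 X2"
    have X1_0: "X1 \<ge> 0" using w0 d1 Js_pos by (simp add: X1_def)
    have X2_0: "X2 \<ge> 0" using w0 d1 Js_pos Rpos rho_pos by (simp add: X2_def)
    have X1_le: "X1 \<le> real N * z / (8 * K)"
    proof -
      have "X1 \<le> real N * w / (2 * Js)"
        unfolding X1_def using d1 Js_pos w0 N by (intro divide_left_mono) auto
      also have "\<dots> \<le> real N * (z / (4 * c1 M)) / (2 * Js)"
        using wle Js_pos by (intro divide_right_mono mult_left_mono) auto
      finally show ?thesis by (simp add: K_def)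
    qed
    have X2_le: "X2 \<le> z * \<rho> / (4 * K * R)"
    proof -
      have "X2 = w * \<rho> / (d * exp 1 * R * Js)" using rho_pos by (simp add: X2_def)
      also have "\<dots> \<le> w * \<rho> / (1 * 1 * R * Js)"
        using d1 Js_pos Rpos w0 rho_pos by (intro divide_left_mono mult_right_mono mult_mono) auto
      also have "\<dots> \<le> (z / (4 * c1 M)) * \<rho> / (1 * 1 * R * Js)"
        using wle Js_pos Rpos rho_pos by (intro divide_right_mono mult_right_mono) auto
      finally show ?thesis by (simp add: K_def mult_ac)
    qed
    have E1: "E \<le> X1" using X1_0 by (simp add: E_def mult_left_le)
    have E2: "E \<le> X1 * X2" using X1_0 by (simp add: E_def mult_left_mono)
    have E3: "E \<le> real N * z^2 * \<rho> / (32 * K^2 * R)"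
    proof -
      have "X1 * X2 \<le> (real N * z / (8 * K)) * (z * \<rho> / (4 * K * R))"
        using X1_le X2_le X1_0 X2_0 by (intro mult_mono) auto
      also have "\<dots> = real N * z^2 * \<rho> / (32 * K^2 * R)" by (simp add: power2_eq_square field_simps)
      finally show ?thesis using E2 by simp
    qed
    have zeta_eq: "2 * zeta CARD('d) N (1 / \<rho>) (Rstar JJ r (MBall M c \<delta>0)) (Jstar JJ)
               ((z * (1 - exp (- 1 / 2)) / (2 * c1 M)) * exp (- Lconst JJ Dr (MBall M c \<delta>0) / \<rho>))
        = 4 * d * exp (- E)"
      by (simp add: zeta_def E_def X1_def X2_def w_def R_def L_def Js_def d_def)
    have RHS_ge: "4 * exp (- E) \<le> 4 * d * exp (- E)" using d1 by simp
    have main: "sum \<pi> A0 \<le> 4 * d * exp (- E)"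
    proof (cases "32 * R * K^2 \<le> real N * z^2 * \<rho>")
      case False
      have "real N * z^2 * \<rho> / (32 * K^2 * R) < 1" using False Rpos Kpos by (simp add: field_simps)
      then have "E < 1" using E3 by simp
      then have ee: "exp (- 1) \<le> exp (- E)" by simp
      have "exp (1::real) \<le> 3" using exp_bound[of 1] by simp
      then have "1 / 3 \<le> exp (- 1 :: real)" by (simp add: exp_minus field_simps)
      with ee have "4 / 3 \<le> 4 * exp (- E)" by linarith
      then show ?thesis using LHS1 RHS_ge by linarith
    next
      case True
      define \<theta> where "\<theta> = min (1 / K) (\<rho> * z / (4 * K^2 * R))"
      have th0: "\<theta> > 0" using Kpos rho_pos z Rpos by (simp add: \<theta>_def)
      have thK: "\<theta> * K \<le> 1" using Kpos by (simp add: \<theta>_def min_def field_simps)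
      have th2: "\<theta> \<le> \<rho> * z / (4 * K^2 * R)" by (simp add: \<theta>_def)
      define s where "s = sqrt (real N * R * K^2 / (2 * \<rho>))"
      have s0: "s > 0" using N Rpos Kpos rho_pos by (simp add: s_def)
      have s2: "s^2 = real N * R * K^2 / (2 * \<rho>)" using N Rpos Kpos rho_pos by (simp add: s_def)
      define m where "m = 2 * s + \<theta> * K^2 * real N * R / \<rho>"
      define psi' where "psi' x = psi M s (rvec x - real N *\<^sub>R c)" for x
      define a where "a = real N * z"
      have a0: "a > 0" using N z by (simp add: a_def)
      have m0: "0 \<le> m" using s0 th0 Kpos N Rpos rho_pos by (simp add: m_def)
      have m_le: "m \<le> a / 2"
      proof -
        have "s \<le> real N * z / 8"
        proof -
          have "real N * R * K^2 / (2 * \<rho>) \<le> (real N * z / 8)^2"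
            using True N rho_pos by (simp add: power2_eq_square field_simps)
          then have "s \<le> sqrt ((real N * z / 8)^2)" unfolding s_def by (rule real_sqrt_le_mono)
          then show ?thesis using N z by simp
        qed
        moreover have "\<theta> * K^2 * real N * R / \<rho> \<le> real N * z / 4"
        proof -
          have "\<theta> * K^2 * real N * R / \<rho> \<le> (\<rho> * z / (4 * K^2 * R)) * K^2 * real N * R / \<rho>"
            using th2 Kpos N Rpos rho_pos by (intro divide_right_mono mult_right_mono) auto
          also have "\<dots> = real N * z / 4" using Kpos Rpos rho_pos by (simp add: power2_eq_square field_simps)
          finally show ?thesis .
        qed
        ultimately show ?thesis unfolding m_def a_def by linarith
      qed
      have gen: "(\<Sum>y\<in>XX - {x}. trunc_rate JJ r N XX x y * (exp (\<theta> * psi' y) - exp (\<theta> * psi' x)))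
                  \<le> (\<theta> * \<rho>) * exp (\<theta> * psi' x) * (m - psi' x)" if x: "x \<in> XX" for x
      proof -
        have xS: "x \<in> S N" and xM: "Mnorm M (rvec x - real N *\<^sub>R c) \<le> real N * \<delta>"
          using x by (auto simp: XX_def)
        have Npos: "real N > 0" using N by simp
        define yx where "yx = (1 / real N) *\<^sub>R rvec x"
        define v where "v = rvec x - real N *\<^sub>R c"
        have v_eq: "v = real N *\<^sub>R (yx - c)" using Npos by (simp add: v_def yx_def scaleR_diff_right)
        have Mnv: "Mnorm M v = real N * Mnorm M (yx - c)" using Mnorm_scale[OF M_spd] v_eq by simp
        have yc: "Mnorm M (yx - c) \<le> \<delta>0"
        proof -
          have "real N * Mnorm M (yx - c) \<le> real N * \<delta>" using xM Mnv by (simp add: v_def)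
          then have "Mnorm M (yx - c) \<le> \<delta>" using Npos by simp
          then show ?thesis using dd delta1(2) by simp
        qed
        have yMB: "yx \<in> MBall M c \<delta>0" using yc by (simp add: MBall_def)
        have yS: "yx \<in> Shat" using yMB ball0 by blast
        have rnn: "0 \<le> r J yx" if "J \<in> JJ" for J using r_nonneg[OF that yS] .
        define Vf where "Vf x' = exp (\<theta> * psi' x')" for x'
        define P where "P = psi M s v"
        have psi'_x: "psi' x = P" by (simp add: psi'_def v_def P_def)
        have psi'_J: "psi' (x + J) = psi M s (v + rvec J)" for J
          by (simp add: psi'_def v_def rvec_add algebra_simps)
        have Ppos: "P > 0" using psi_pos[OF M_spd s0] by (simp add: P_def)
        have Pge: "s \<le> P" using psi_ge_s[OF M_spd s0] by (simp add: P_def)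
        have Psq: "P^2 = (Mnorm M v)^2 + s^2" using psi_sq[OF M_spd s0] by (simp add: P_def)
        have Vpos: "Vf x > 0" by (simp add: Vf_def)
        define T where "T J = real N * r J yx * (Vf (x + J) - Vf x)" for J
        have step1: "(\<Sum>y\<in>XX - {x}. trunc_rate JJ r N XX x y * (Vf y - Vf x))
            = (\<Sum>J\<in>JJ. if x + J \<in> XX - {x} then T J else 0)"
          unfolding T_def yx_def by (rule jump_reindex[OF finXX JJ_fin x])
        have step2: "(\<Sum>J\<in>JJ. if x + J \<in> XX - {x} then T J else 0) \<le> (\<Sum>J\<in>JJ. T J)"
        proof (rule sum_mono)
          fix J assume J: "J \<in> JJ"
          show "(if x + J \<in> XX - {x} then T J else 0) \<le> T J"
          proof (cases "x + J \<in> XX - {x}")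
            case True then show ?thesis by simp
          next
            case False
            show ?thesis
            proof (cases "x + J = x")
              case True then show ?thesis by (simp add: T_def)
            next
              case ne: False
              then have nX: "x + J \<notin> XX" using False by blast
              show ?thesis
              proof (cases "x + J \<in> S N")
                case True
                then have big: "Mnorm M (rvec (x + J) - real N *\<^sub>R c) > real N * \<delta>" using nX by (auto simp: XX_def)
                have "Mnorm M (v + rvec J) > Mnorm M v"
                  using big xM by (simp add: v_def rvec_add algebra_simps)
                then have "(Mnorm M v)^2 \<le> (Mnorm M (v + rvec J))^2"
                  using Mnorm_nonneg[OF M_spd, of v] by (intro power_mono) auto
                then have "psi' x \<le> psi' (x + J)"
                  unfolding psi'_x psi'_J P_def using psi_def[OF M_spd s0] by simp
                then have "Vf x \<le> Vf (x + J)" using th0 by (simp add: Vf_def)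
                then have "0 \<le> T J" using rnn[OF J] Npos by (simp add: T_def)
                then show ?thesis using False by simp
              next
                case False
                then have "\<not> r J ((1 / real N) *\<^sub>R rvec x) > 0" using S_jumps[OF N xS J] by blast
                then have "r J yx = 0" using rnn[OF J] by (simp add: yx_def)
                then show ?thesis by (simp add: T_def)
              qed
            qed
          qed
        qed
        define B where "B = bf M v (drift JJ r yx)"
        define Sr where "Sr = (\<Sum>J\<in>JJ. r J yx)"
        have step3: "(\<Sum>J\<in>JJ. T J) \<le> (\<Sum>J\<in>JJ. real N * r J yx * (Vf x * (\<theta> * ((2 * bf M v (rvec J) + K^2) / (2 * P)) + \<theta>^2 * K^2)))"
        proof (rule sum_mono)
          fix J assume J: "J \<in> JJ"
          have "Vf (x + J) - Vf x \<le> Vf x * (\<theta> * ((2 * bf M v (rvec J) + (Mnorm M (rvec J))\<^sup>2) / (2 * P)) + \<theta>^2 * K^2)"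
            using exp_psi_step[OF M_spd s0 th0 MnJ[OF J] thK, of v] by (simp add: Vf_def psi'_x psi'_J P_def)
          also have "\<dots> \<le> Vf x * (\<theta> * ((2 * bf M v (rvec J) + K^2) / (2 * P)) + \<theta>^2 * K^2)"
          proof -
            have "(Mnorm M (rvec J))\<^sup>2 \<le> K^2" using MnJ[OF J] Mnorm_nonneg[OF M_spd] by (intro power_mono) auto
            then have "(2 * bf M v (rvec J) + (Mnorm M (rvec J))\<^sup>2) / (2 * P) \<le> (2 * bf M v (rvec J) + K^2) / (2 * P)"
              using Ppos by (intro divide_right_mono) auto
            then show ?thesis using th0 Vpos by (intro mult_left_mono add_right_mono) auto
          qed
          finally show "T J \<le> real N * r J yx * (Vf x * (\<theta> * ((2 * bf M v (rvec J) + K^2) / (2 * P)) + \<theta>^2 * K^2))"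
            unfolding T_def using rnn[OF J] Npos by (intro mult_left_mono) auto
        qed
        have Bsum: "B = (\<Sum>J\<in>JJ. r J yx * bf M v (rvec J))"
          unfolding B_def drift_def bf_sum_right by (simp add: bf_scale_right)
        have step4: "(\<Sum>J\<in>JJ. real N * r J yx * (Vf x * (\<theta> * ((2 * bf M v (rvec J) + K^2) / (2 * P)) + \<theta>^2 * K^2)))
            = (real N * Vf x * \<theta> / P) * B + (real N * Vf x * (\<theta> * K^2 / (2 * P) + \<theta>^2 * K^2)) * Sr"
        proof -
          have "(\<Sum>J\<in>JJ. real N * r J yx * (Vf x * (\<theta> * ((2 * bf M v (rvec J) + K^2) / (2 * P)) + \<theta>^2 * K^2)))
              = (\<Sum>J\<in>JJ. (real N * Vf x * \<theta> / P) * (r J yx * bf M v (rvec J)) + (real N * Vf x * (\<theta> * K^2 / (2 * P) + \<theta>^2 * K^2)) * r J yx)"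
            using Ppos by (intro sum.cong refl) (simp add: field_simps)
          also have "\<dots> = (real N * Vf x * \<theta> / P) * B + (real N * Vf x * (\<theta> * K^2 / (2 * P) + \<theta>^2 * K^2)) * Sr"
            by (simp add: sum.distrib sum_distrib_left Bsum Sr_def)
          finally show ?thesis .
        qed
        have NB: "real N * B \<le> - \<rho> * (Mnorm M v)^2"
        proof -
          have Beq: "B = real N * bf M (yx - c) (drift JJ r yx)" by (simp add: B_def v_eq bf_scale_left)
          have dr: "bf M (yx - c) (drift JJ r yx) \<le> - \<rho> * (Mnorm M (yx - c))\<^sup>2" by (rule drift_closed[OF yc])
          have "real N * B = (real N * real N) * bf M (yx - c) (drift JJ r yx)" using Beq by simp
          also have "\<dots> \<le> (real N * real N) * (- \<rho> * (Mnorm M (yx - c))\<^sup>2)"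
            using dr by (intro mult_left_mono) auto
          also have "\<dots> = - \<rho> * (Mnorm M v)^2" by (simp add: Mnv power2_eq_square)
          finally show ?thesis .
        qed
        have Sr0: "0 \<le> Sr" unfolding Sr_def using rnn by (intro sum_nonneg) auto
        have SrR: "Sr \<le> R" unfolding Sr_def by (rule Rge[OF yMB])
        have NKR: "real N * K^2 * R = 2 * \<rho> * s^2" using s2 rho_pos by (simp add: field_simps)
        define Q where "Q = 2 * real N * B + real N * K^2 * Sr"
        have Qle: "Q \<le> - 2 * \<rho> * P^2 + 4 * \<rho> * s^2"
        proof -
          have "real N * K^2 * Sr \<le> real N * K^2 * R" using SrR Npos by (intro mult_left_mono) auto
          then show ?thesis using NB NKR Psq unfolding Q_def by (simp add: algebra_simps)
        qed
        have Qdiv: "Q / (2 * P) \<le> - \<rho> * P + 2 * \<rho> * s"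
        proof -
          have "Q / (2 * P) \<le> (- 2 * \<rho> * P^2 + 4 * \<rho> * s^2) / (2 * P)" using Qle Ppos by (intro divide_right_mono) auto
          also have "\<dots> = - \<rho> * P + 2 * \<rho> * (s^2 / P)" using Ppos by (simp add: field_simps power2_eq_square)
          also have "s^2 / P \<le> s" using Ppos Pge s0 by (simp add: power2_eq_square divide_le_eq mult_left_mono)
          then have "2 * \<rho> * (s^2 / P) \<le> 2 * \<rho> * s" using rho_pos by (intro mult_left_mono) auto
          then have "- \<rho> * P + 2 * \<rho> * (s^2 / P) \<le> - \<rho> * P + 2 * \<rho> * s" by linarith
          finally show ?thesis .
        qed
        have step5: "(real N * Vf x * \<theta> / P) * B + (real N * Vf x * (\<theta> * K^2 / (2 * P) + \<theta>^2 * K^2)) * Sr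
            \<le> (\<theta> * \<rho>) * Vf x * (m - P)"
        proof -
          have "(real N * Vf x * \<theta> / P) * B + (real N * Vf x * (\<theta> * K^2 / (2 * P) + \<theta>^2 * K^2)) * Sr
              = Vf x * \<theta> * (Q / (2 * P)) + Vf x * \<theta>^2 * K^2 * real N * Sr"
            using Ppos by (simp add: Q_def field_simps power2_eq_square)
          also have "\<dots> \<le> Vf x * \<theta> * (- \<rho> * P + 2 * \<rho> * s) + Vf x * \<theta>^2 * K^2 * real N * R"
            using Qdiv SrR Vpos th0 Npos by (intro add_mono mult_left_mono) auto
          also have "\<dots> = (\<theta> * \<rho>) * Vf x * (m - P)"
            using rho_pos by (simp add: m_def field_simps power2_eq_square)
          finally show ?thesis .
        qed
        have "(\<Sum>y\<in>XX - {x}. trunc_rate JJ r N XX x y * (Vf y - Vf x)) \<le> (\<theta> * \<rho>) * Vf x * (m - P)"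
          using step1 step2 step3 step4 step5 by linarith
        then show ?thesis by (simp add: Vf_def psi'_x)
      qed
      have tail: "(\<Sum>x\<in>{x\<in>XX. psi' x > a}. \<pi> x) \<le> exp (- \<theta> * a / 2)"
        by (rule lyap_tail[OF st finXX th0 _ gen _ a0 m0 m_le])
           (use rho_pos th0 psi_pos[OF M_spd s0] in \<open>auto simp: psi'_def intro: less_imp_le\<close>)
      have "sum \<pi> A0 \<le> (\<Sum>x\<in>{x\<in>XX. psi' x > a}. \<pi> x)"
      proof (rule sum_mono2)
        show "finite {x\<in>XX. psi' x > a}" using finXX by simp
        show "A0 \<subseteq> {x\<in>XX. psi' x > a}"
        proof
          fix x assume "x \<in> A0"
          then have "x \<in> XX" "Mnorm M (rvec x - real N *\<^sub>R c) > a" by (auto simp: A0_def XX_def a_def)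
          then show "x \<in> {x\<in>XX. psi' x > a}"
            using psi_ge_Mnorm[OF M_spd s0, of "rvec x - real N *\<^sub>R c"] by (auto simp: psi'_def)
        qed
      qed (use p0 in auto)
      also have "\<dots> \<le> exp (- \<theta> * a / 2)" by (rule tail)
      also have "\<dots> \<le> exp (- E)"
      proof -
        have "E \<le> \<theta> * a / 2"
        proof (cases "1 / K \<le> \<rho> * z / (4 * K^2 * R)")
          case True
          then have "\<theta> = 1 / K" by (simp add: \<theta>_def)
          moreover have "real N * z / (8 * K) \<le> (1 / K) * (real N * z) / 2" using Kpos N z by (simp add: field_simps)
          ultimately show ?thesis using E1 X1_le by (simp add: a_def)
        next
          case False
          then have "\<theta> = \<rho> * z / (4 * K^2 * R)" by (simp add: \<theta>_def)
          moreover have "real N * z^2 * \<rho> / (32 * K^2 * R) \<le> (\<rho> * z / (4 * K^2 * R)) * (real N * z) / 2"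
            using Kpos N z Rpos rho_pos by (simp add: power2_eq_square field_simps)
          ultimately show ?thesis using E3 by (simp add: a_def)
        qed
        then show ?thesis by simp
      qed
      also have "\<dots> \<le> 4 * d * exp (- E)" using d1 by simp
      finally show ?thesis .
    qed
    show "(\<Sum>X\<in>{X \<in> S N. Mnorm M (rvec X - real N *\<^sub>R c) \<le> real N * \<delta>
              \<and> Mnorm M (rvec X - real N *\<^sub>R c) > real N * z}. \<pi> X)
       \<le> 2 * zeta CARD('d) N (1 / \<rho>) (Rstar JJ r (MBall M c \<delta>0)) (Jstar JJ)
               ((z * (1 - exp (- 1 / 2)) / (2 * c1 M)) * exp (- Lconst JJ Dr (MBall M c \<delta>0) / \<rho>))"
      using main unfolding zeta_eq A0_def .
  qed
qed


end
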